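(* For every $N\geqslant 2$ there exists a piecewise affine contracting interval map $f$ (affine on each contraction piece) which has $N$ contraction pieces and satisfies the separation property, whose attractor $\Lambda$ is a minimal Cantor set, and such that every discontinuity of $f$ is left-right recurrently visited by every orbit, i.e. $\Delta_{lr}(x)=\Delta$ for all $x\in X$.
   Context: Let $X$ be a compact interval of $\mathbb{R}$ and $X_1<\dots<X_N$ ($N\geqslant 2$) non-empty pairwise disjoint intervals, open in $X$, with $X=\bigcup_i\overline{X_i}$; $\Delta:=\{x\in\overline{X_i}\cap\overline{X_j}:i\neq j\}=\{c_1,\dots,c_{N-1}\}$, $\{c_i\}=\overline{X_i}\cap\overline{X_{i+1}}$. A piecewise contracting interval map is $f:X\to X$, discontinuous at every point of $\Delta$, with some $\lambda\in(0,1)$ such that $|f(x)-f(y)|\leqslant\lambda|x-y|$ for $x,y$ in the same $X_i$; $f_i$ denotes the continuous extension of $f|_{X_i}$ to $\overline{X_i}$. Separation property: each $f_i$ injective and $f_i(\overline{X_i})\cap f_j(\overline{X_j})=\emptyset$ for $i\neq j$. Atoms: $F_i(A):=\overline{f(A\cap X_i)}$, $A_{i_1\dots i_n}:=F_{i_n}\circ\dots\circ F_{i_1}(X)$ is an atom of generation $n$ if non-empty; $\mathcal{A}_n$ is the set of atoms of generation $n$; $\mathcal{A}_n(x):=\{A\in\mathcal{A}_n:\exists t\in\mathbb{N},\ f^{t+n}(x)\in A\}$. The attractor is $\Lambda:=\bigcap_{n\geqslant1}\bigcup_{A\in\mathcal{A}_n}A$. $c_i$ is $n$-left-right visited by the orbit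 of $x$ if there is $A\in\mathcal{A}_n(x)$ with $c_i\in A$, $f^{t+n}(x)\in A\cap X_i$ and $f^{t'+n}(x)\in A\cap X_{i+1}$ for some $t,t'\in\mathbb{N}$; $\Delta^n_{lr}(x)$ is the set of such discontinuities and $\Delta_{lr}(x):=\bigcap_{n\geqslant 1}\Delta^n_{lr}(x)$. $\Lambda$ minimal means $f(\Lambda)\subset\Lambda$ and the forward orbit of every point of $\Lambda$ is dense in $\Lambda$. *)

theory Defs
  imports "HOL-Analysis.Analysis"
begin

definition pieces_partition :: "nat \<Rightarrow> real \<Rightarrow> real \<Rightarrow> (nat \<Rightarrow> real set) \<Rightarrow> bool" where
  "pieces_partition N a b P \<longleftrightarrow>
     a < b \<and> N \<ge> 2 \<and>
     (\<forall>i\<in>{1..N}. P i \<noteq> {} \<and> is_interval (P i) \<and> openin (top_of_set {a..b}) (P i)) \<and>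
     (\<forall>i\<in>{1..N}. \<forall>j\<in>{1..N}. i < j \<longrightarrow> (\<forall>x\<in>P i. \<forall>y\<in>P j. x < y)) \<and>
     (\<forall>i\<in>{1..N}. \<forall>j\<in>{1..N}. i \<noteq> j \<longrightarrow> P i \<inter> P j = {}) \<and>
     (\<Union>i\<in>{1..N}. closure (P i)) = {a..b}"

definition Delta :: "nat \<Rightarrow> (nat \<Rightarrow> real set) \<Rightarrow> real set" where
  "Delta N P = {x. \<exists>i\<in>{1..N}. \<exists>j\<in>{1..N}. i \<noteq> j \<and> x \<in> closure (P i) \<inter> closure (P j)}"

definition piecewise_contracting :: "nat \<Rightarrow> real \<Rightarrow> real \<Rightarrow> (nat \<Rightarrow> real set) \<Rightarrow> (real \<Rightarrow> real) \<Rightarrow> bool" where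
  "piecewise_contracting N a b P f \<longleftrightarrow>
     pieces_partition N a b P \<and>
     f ` {a..b} \<subseteq> {a..b} \<and>
     (\<forall>c\<in>Delta N P. \<not> continuous (at c within {a..b}) f) \<and>
     (\<exists>lam::real. 0 < lam \<and> lam < 1 \<and>
        (\<forall>i\<in>{1..N}. \<forall>x\<in>P i. \<forall>y\<in>P i. \<bar>f x - f y\<bar> \<le> lam * \<bar>x - y\<bar>))"

definition piecewise_affine :: "nat \<Rightarrow> (nat \<Rightarrow> real set) \<Rightarrow> (real \<Rightarrow> real) \<Rightarrow> bool" where
  "piecewise_affine N P f \<longleftrightarrow>
     (\<forall>i\<in>{1..N}. \<exists>\<alpha> \<beta>::real. \<forall>x\<in>P i. f x = \<alpha> * x + \<beta>)"

text \<open>Separation property, with f_i the continuous extension of f restricted to P i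
  to the closure of P i (unique when it exists).\<close>
definition separation :: "nat \<Rightarrow> (nat \<Rightarrow> real set) \<Rightarrow> (real \<Rightarrow> real) \<Rightarrow> bool" where
  "separation N P f \<longleftrightarrow>
     (\<exists>g :: nat \<Rightarrow> real \<Rightarrow> real.
        (\<forall>i\<in>{1..N}. continuous_on (closure (P i)) (g i) \<and> (\<forall>x\<in>P i. g i x = f x)
                     \<and> inj_on (g i) (closure (P i))) \<and>
        (\<forall>i\<in>{1..N}. \<forall>j\<in>{1..N}. i \<noteq> j \<longrightarrow> g i ` closure (P i) \<inter> g j ` closure (P j) = {}))"

definition Fmap :: "(nat \<Rightarrow> real set) \<Rightarrow> (real \<Rightarrow> real) \<Rightarrow> nat \<Rightarrow> real set \<Rightarrow> real set" where
  "Fmap P f i A = closure (f ` (A \<inter> P i))"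

text \<open>A_{i_1...i_n} = F_{i_n} o ... o F_{i_1} (X) for the word [i_1,...,i_n].\<close>
definition atom_of :: "real \<Rightarrow> real \<Rightarrow> (nat \<Rightarrow> real set) \<Rightarrow> (real \<Rightarrow> real) \<Rightarrow> nat list \<Rightarrow> real set" where
  "atom_of a b P f w = fold (Fmap P f) w {a..b}"

definition atoms :: "nat \<Rightarrow> real \<Rightarrow> real \<Rightarrow> (nat \<Rightarrow> real set) \<Rightarrow> (real \<Rightarrow> real) \<Rightarrow> nat \<Rightarrow> real set set" where
  "atoms N a b P f n = {atom_of a b P f w | w. length w = n \<and> set w \<subseteq> {1..N} \<and> atom_of a b P f w \<noteq> {}}"

definition attractor :: "nat \<Rightarrow> real \<Rightarrow> real \<Rightarrow> (nat \<Rightarrow> real set) \<Rightarrow> (real \<Rightarrow> real) \<Rightarrow> real set" where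
  "attractor N a b P f = (\<Inter>n\<in>{1..}. \<Union>(atoms N a b P f n))"

definition atoms_visited :: "nat \<Rightarrow> real \<Rightarrow> real \<Rightarrow> (nat \<Rightarrow> real set) \<Rightarrow> (real \<Rightarrow> real) \<Rightarrow> nat \<Rightarrow> real \<Rightarrow> real set set" where
  "atoms_visited N a b P f n x = {A \<in> atoms N a b P f n. \<exists>t. (f ^^ (t + n)) x \<in> A}"

definition Delta_lr_n :: "nat \<Rightarrow> real \<Rightarrow> real \<Rightarrow> (nat \<Rightarrow> real set) \<Rightarrow> (real \<Rightarrow> real) \<Rightarrow> nat \<Rightarrow> real \<Rightarrow> real set" where
  "Delta_lr_n N a b P f n x = {c. \<exists>i\<in>{1..<N}. c \<in> closure (P i) \<inter> closure (P (Suc i)) \<and>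
      (\<exists>A\<in>atoms_visited N a b P f n x. c \<in> A \<and>
         (\<exists>t. (f ^^ (t + n)) x \<in> A \<inter> P i) \<and>
         (\<exists>t'. (f ^^ (t' + n)) x \<in> A \<inter> P (Suc i)))}"

definition Delta_lr :: "nat \<Rightarrow> real \<Rightarrow> real \<Rightarrow> (nat \<Rightarrow> real set) \<Rightarrow> (real \<Rightarrow> real) \<Rightarrow> real \<Rightarrow> real set" where
  "Delta_lr N a b P f x = (\<Inter>n\<in>{1..}. Delta_lr_n N a b P f n x)"

definition minimal_set :: "(real \<Rightarrow> real) \<Rightarrow> real set \<Rightarrow> bool" where
  "minimal_set f L \<longleftrightarrow> f ` L \<subseteq> L \<and> (\<forall>y\<in>L. L \<subseteq> closure {(f ^^ n) y | n. True})"

definition cantor_set :: "real set \<Rightarrow> bool" where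
  "cantor_set S \<longleftrightarrow> S \<noteq> {} \<and> compact S \<and> (\<forall>x\<in>S. x islimpt S) \<and>
     (\<forall>x\<in>S. connected_component_set S x = {x})"

end

theory Submission
  imports Defs
begin


locale cons =
  fixes K :: nat and \<theta> :: real and y :: "nat \<Rightarrow> real"
  assumes K1: "1 \<le> K"
  and th0: "0 < \<theta>" and th1: "\<theta> < 1/2"
  and irr: "\<theta> \<notin> \<rat>"
  and y0: "y 0 = 0"
  and ymono: "\<And>j k. j < k \<Longrightarrow> k < K \<Longrightarrow> y j < y k"
  and ylast: "\<And>j. j < K \<Longrightarrow> y j < 1 - \<theta>"
  and indep: "\<And>j k m n. j < K \<Longrightarrow> k < K \<Longrightarrow> y j - y k = of_int m * \<theta> + of_int n \<Longrightarrow> j = k \<and> m = 0"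
begin

lemma ynonneg: "j < K \<Longrightarrow> 0 \<le> y j"
  using ymono[of 0 j] y0 by (cases j) auto

definition p :: "nat \<Rightarrow> nat \<Rightarrow> real" where "p j n = frac (y j + real n * \<theta>)"

definition cntm :: "real set \<Rightarrow> nat \<Rightarrow> nat" where
  "cntm I n = card {j. j < K \<and> p j (Suc n) \<in> I}"

definition mass :: "real set \<Rightarrow> real" where
  "mass I = (\<Sum>n. (1/2)^(Suc n) * real (cntm I n))"

lemma cntm_le: "cntm I n \<le> K"
proof -
  have "{j. j < K \<and> p j (Suc n) \<in> I} \<subseteq> {..<K}" by auto
  then show ?thesis unfolding cntm_def by (metis card_lessThan card_mono finite_lessThan)
qed

lemma geo_sums: "(\<lambda>n. (1/2::real)^(Suc n)) sums 1"
proof -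
  have "(\<lambda>n. (1/2::real)^n) sums 2" using geometric_sums[of "1/2::real"] by simp
  from sums_mult[OF this, of "1/2"] show ?thesis by simp
qed

lemma mass_summable: "summable (\<lambda>n. (1/2::real)^(Suc n) * real (cntm I n))"
proof (rule summable_comparison_test'[where g="\<lambda>n. real K * (1/2)^(Suc n)"])
  show "summable (\<lambda>n. real K * (1/2::real)^(Suc n))"
    using geo_sums sums_summable summable_mult by blast
  fix n show "norm ((1/2::real)^(Suc n) * real (cntm I n)) \<le> real K * (1/2)^(Suc n)"
    using cntm_le[of I n] by (simp add: mult.commute)
qed

lemma mass_nonneg: "0 \<le> mass I"
  unfolding mass_def by (intro suminf_nonneg mass_summable) simp

lemma cntm_mono: "I \<subseteq> J \<Longrightarrow> cntm I n \<le> cntm J n"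
  unfolding cntm_def by (intro card_mono) auto

lemma mass_mono: "I \<subseteq> J \<Longrightarrow> mass I \<le> mass J"
  unfolding mass_def
  by (intro suminf_le mass_summable) (simp add: cntm_mono)

lemma cntm_union: "I \<inter> J = {} \<Longrightarrow> cntm (I \<union> J) n = cntm I n + cntm J n"
proof -
  assume d: "I \<inter> J = {}"
  have "{j. j < K \<and> p j (Suc n) \<in> I \<union> J} = {j. j < K \<and> p j (Suc n) \<in> I} \<union> {j. j < K \<and> p j (Suc n) \<in> J}"
    by auto
  moreover have "{j. j < K \<and> p j (Suc n) \<in> I} \<inter> {j. j < K \<and> p j (Suc n) \<in> J} = {}" using d by auto
  ultimately show ?thesis unfolding cntm_def by (simp add: card_Un_disjoint)
qed

lemma mass_union: "I \<inter> J = {} \<Longrightarrow> mass (I \<union> J) = mass I + mass J"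
  unfolding mass_def
  apply (subst suminf_add[OF mass_summable mass_summable])
  by (simp add: cntm_union distrib_left)

lemma mass_diff: "I \<subseteq> J \<Longrightarrow> mass (J - I) = mass J - mass I"
proof -
  assume "I \<subseteq> J"
  then have "J = I \<union> (J - I)" "I \<inter> (J - I) = {}" by auto
  then show ?thesis using mass_union by (metis add_diff_cancel_left')
qed

lemma mass_tail:
  assumes "\<And>j n. j < K \<Longrightarrow> n < M \<Longrightarrow> p j (Suc n) \<notin> I"
  shows "mass I \<le> real K * (1/2)^M"
proof -
  define a where "a n = (1/2::real)^(Suc n) * real (cntm I n)" for n
  have a0: "a n = 0" if "n < M" for n
  proof -
    have "{j. j < K \<and> p j (Suc n) \<in> I} = {}" using assms that by auto
    then show ?thesis unfolding a_def cntm_def by simp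
  qed
  have s: "summable a" unfolding a_def by (rule mass_summable)
  have "mass I = (\<Sum>n. a (n + M)) + sum a {..<M}"
    unfolding mass_def a_def[symmetric] by (rule suminf_split_initial_segment[OF s])
  also have "sum a {..<M} = 0" using a0 by simp
  also have "(\<Sum>n. a (n + M)) \<le> (\<Sum>n. real K * (1/2)^M * (1/2)^(Suc n))"
  proof (rule suminf_le)
    fix n show "a (n + M) \<le> real K * (1/2)^M * (1/2)^(Suc n)"
      using cntm_le[of I "n+M"] unfolding a_def
      by (simp add: power_add mult_ac mult_left_mono)
    show "summable (\<lambda>n. a (n + M))" using s by (simp add: summable_iff_shift)
    show "summable (\<lambda>n. real K * (1/2)^M * (1/2::real)^(Suc n))"
      using geo_sums sums_summable summable_mult by blast
  qed
  also have "(\<Sum>n. real K * (1/2)^M * (1/2::real)^(Suc n)) = real K * (1/2)^M"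
    using sums_unique[OF sums_mult[OF geo_sums, of "real K * (1/2)^M"]] by simp
  finally show ?thesis by simp
qed

lemma mass_pos:
  assumes "j < K" "p j (Suc n) \<in> I"
  shows "mass I > 0"
proof -
  have "cntm I n \<ge> 1"
  proof -
    have "j \<in> {j. j < K \<and> p j (Suc n) \<in> I}" using assms by auto
    moreover have "finite {j. j < K \<and> p j (Suc n) \<in> I}" by auto
    ultimately show ?thesis unfolding cntm_def by (metis One_nat_def Suc_leI card_gt_0_iff empty_iff)
  qed
  then have pos: "(1/2::real)^(Suc n) * real (cntm I n) > 0" by simp
  have "(1/2::real)^(Suc n) * real (cntm I n) \<le> mass I"
    unfolding mass_def
    using sum_le_suminf[OF mass_summable, of "{n}" I] by simp
  with pos show ?thesis by linarith
qed

lemma mass_zero: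
  assumes "\<And>j n. j < K \<Longrightarrow> p j (Suc n) \<notin> I"
  shows "mass I = 0"
proof -
  have "cntm I n = 0" for n using assms unfolding cntm_def by auto
  then show ?thesis unfolding mass_def by simp
qed

lemma mass_UNIV: "mass UNIV = real K"
proof -
  have "cntm UNIV n = K" for n unfolding cntm_def by simp
  then have "mass UNIV = (\<Sum>n. real K * (1/2::real)^(Suc n))" unfolding mass_def by (simp add: mult.commute)
  also have "\<dots> = real K" using sums_unique[OF sums_mult[OF geo_sums, of "real K"]] by simp
  finally show ?thesis .
qed


lemma frac_eq_iff: "frac a = frac b \<longleftrightarrow> a - b \<in> \<int>"
proof -
  have "frac a = frac b \<longleftrightarrow> a - frac b \<in> \<int>" using frac_unique_iff[of a "frac b"] frac_lt_1[of b] by auto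
  also have "a - frac b = (a - b) + of_int \<lfloor>b\<rfloor>" by (simp add: frac_def)
  also have "\<dots> \<in> \<int> \<longleftrightarrow> a - b \<in> \<int>"
    by (metis Ints_add Ints_diff Ints_of_int add_diff_cancel_right')
  finally show ?thesis .
qed

lemma indep': "j < K \<Longrightarrow> k < K \<Longrightarrow> y j - y k - of_int m * \<theta> \<in> \<int> \<Longrightarrow> j = k \<and> m = 0"
proof -
  assume a: "j < K" "k < K" "y j - y k - of_int m * \<theta> \<in> \<int>"
  then obtain n where "y j - y k - of_int m * \<theta> = of_int n" by (auto elim: Ints_cases)
  then have "y j - y k = of_int m * \<theta> + of_int n" by simp
  then show ?thesis using indep a by blast
qed

lemma p_range: "0 \<le> p j n" "p j n < 1"
  unfolding p_def by (auto simp: frac_lt_1)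

lemma y_range: "j < K \<Longrightarrow> 0 \<le> y j \<and> y j < 1"
  using ynonneg ylast th0 by fastforce

lemma p0: "j < K \<Longrightarrow> p j 0 = y j"
  unfolding p_def using y_range by simp

lemma p_Suc: "p j (Suc n) = frac (p j n + \<theta>)"
  unfolding p_def by (simp add: algebra_simps)

lemma frac_shift: "0 \<le> x \<Longrightarrow> x < 1 \<Longrightarrow> frac (x + \<theta>) = (if x < 1 - \<theta> then x + \<theta> else x + \<theta> - 1)"
  using th0 th1 by (auto simp: frac_unique_iff)

lemma p_ne_y: "j < K \<Longrightarrow> k < K \<Longrightarrow> p j (Suc n) \<noteq> y k"
proof
  assume a: "j < K" "k < K" "p j (Suc n) = y k"
  then have "frac (y j + real (Suc n) * \<theta>) = frac (y k)" using y_range unfolding p_def by simp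
  then have "y j + real (Suc n) * \<theta> - y k \<in> \<int>" by (simp add: frac_eq_iff)
  then have "y j - y k - of_int (- int (Suc n)) * \<theta> \<in> \<int>" by (simp add: algebra_simps)
  from indep'[OF a(1,2) this] show False by simp
qed

lemma p_ne_w: "j < K \<Longrightarrow> p j (Suc n) \<noteq> 1 - \<theta>"
proof
  assume a: "j < K" "p j (Suc n) = 1 - \<theta>"
  then have "frac (y j + real (Suc n) * \<theta>) = frac (1 - \<theta>)" using th0 th1 unfolding p_def by simp
  then have "y j + real (Suc n) * \<theta> - (1 - \<theta>) \<in> \<int>" by (simp add: frac_eq_iff)
  then have "y j + real (Suc n) * \<theta> - (1 - \<theta>) + 1 \<in> \<int>" using Ints_add Ints_1 by blast
  moreover have "y j + real (Suc n) * \<theta> - (1 - \<theta>) + 1 = y j - y 0 - of_int (- int (Suc (Suc n))) * \<theta>"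
    by (simp add: algebra_simps y0)
  ultimately have "y j - y 0 - of_int (- int (Suc (Suc n))) * \<theta> \<in> \<int>" by metis
  from indep'[OF a(1) _ this] K1 show False by simp
qed

lemma p_ne_0: "j < K \<Longrightarrow> p j (Suc n) \<noteq> 0"
  using p_ne_y[of j 0 n] K1 y0 by simp

lemma density:
  assumes "0 \<le> a" "a < b" "b \<le> 1"
  shows "\<exists>t\<ge>t0. frac (s + real t * \<theta>) \<in> {a<..<b}"
proof -
  define mid where "mid = (a + b) / 2"
  define \<epsilon> where "\<epsilon> = (b - a) / 2"
  have \<epsilon>: "\<epsilon> > 0" using assms unfolding \<epsilon>_def by simp
  define \<alpha> where "\<alpha> = frac (mid - s)"
  define \<theta>' where "\<theta>' = real (Suc t0) * \<theta>"
  have irr': "\<theta>' \<notin> \<rat>"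
  proof
    assume "\<theta>' \<in> \<rat>"
    then have "\<theta>' / real (Suc t0) \<in> \<rat>" by simp
    then show False using irr unfolding \<theta>'_def by simp
  qed
  have \<alpha>: "0 \<le> \<alpha>" "\<alpha> \<le> 1" unfolding \<alpha>_def using frac_lt_1[of "mid - s"] by auto
  obtain k where k: "k > 0" "\<bar>frac (real k * \<theta>') - \<alpha>\<bar> < \<epsilon>"
    using Kronecker_approx_1_explicit[OF irr' \<alpha> \<epsilon>] by blast
  define e where "e = frac (real k * \<theta>') - \<alpha>"
  define t where "t = k * Suc t0"
  have "t \<ge> t0" unfolding t_def using k(1) by (simp add: trans_le_add2)
  have "s + real t * \<theta> - (mid + e) = (real k * \<theta>' - frac (real k * \<theta>')) - ((mid - s) - frac (mid - s))"
    unfolding t_def \<theta>'_def e_def \<alpha>_def by (simp add: algebra_simps)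
  also have "\<dots> = of_int (\<lfloor>real k * \<theta>'\<rfloor> - \<lfloor>mid - s\<rfloor>)" by (simp add: frac_def)
  finally have i: "s + real t * \<theta> - (mid + e) \<in> \<int>" by (metis Ints_of_int)
  have r: "a < mid + e" "mid + e < b" using k(2) unfolding e_def[symmetric] mid_def \<epsilon>_def by (auto simp: abs_less_iff field_simps)
  have "frac (s + real t * \<theta>) = mid + e"
    using i r assms by (subst frac_unique_iff) auto
  with r \<open>t \<ge> t0\<close> show ?thesis by auto
qed

lemma mass_dense:
  assumes "0 \<le> a" "a < b" "b \<le> 1"
  shows "mass {a<..<b} > 0"
proof -
  obtain t where t: "t \<ge> 1" "frac (0 + real t * \<theta>) \<in> {a<..<b}" using density[OF assms] by blast
  then obtain n where "t = Suc n" by (cases t) auto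
  then have "p 0 (Suc n) \<in> {a<..<b}" using t y0 unfolding p_def by simp
  then show ?thesis using mass_pos[of 0 n] K1 by auto
qed

lemma mass_shift:
  assumes J: "\<And>x. 0 \<le> x \<Longrightarrow> x < 1 \<Longrightarrow> (frac (x + \<theta>) \<in> J \<longleftrightarrow> x \<in> I)"
  and noy: "\<And>j. j < K \<Longrightarrow> y j \<notin> I"
  shows "mass J = mass I / 2"
proof -
  have c0: "cntm J 0 = 0"
  proof -
    have "p j (Suc 0) \<notin> J" if "j < K" for j
      using J[of "p j 0"] p_range[of j 0] noy[OF that] p0[OF that] p_Suc[of j 0] by auto
    then show ?thesis unfolding cntm_def by auto
  qed
  have cS: "cntm J (Suc n) = cntm I n" for n
  proof -
    have "p j (Suc (Suc n)) \<in> J \<longleftrightarrow> p j (Suc n) \<in> I" for j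
      using J[of "p j (Suc n)"] p_range[of j "Suc n"] p_Suc[of j "Suc n"] by auto
    then show ?thesis unfolding cntm_def by simp
  qed
  define a where "a n = (1/2::real)^(Suc n) * real (cntm J n)" for n
  have sa: "summable a" unfolding a_def by (rule mass_summable)
  have "mass J = suminf a" unfolding mass_def a_def ..
  also have "\<dots> = (\<Sum>n. a (Suc n)) + a 0" using suminf_split_head[OF sa] by simp
  also have "a 0 = 0" unfolding a_def using c0 by simp
  also have "(\<Sum>n. a (Suc n)) = (\<Sum>n. (1/2::real)^(Suc n) * real (cntm I n) / 2)"
    unfolding a_def cS by (simp add: mult_ac)
  also have "\<dots> = mass I / 2" unfolding mass_def by (rule suminf_divide[OF mass_summable])
  finally show ?thesis by simp
qed

end



context cons begin

definition H :: "real \<Rightarrow> real" where "H s = mass {..<s}"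
definition Hp :: "real \<Rightarrow> real" where "Hp s = mass {..s}"
definition u :: "nat \<Rightarrow> real" where
  "u i = (if i < K then y i else if i = K then 1 - \<theta> else 1)"
definition Fib :: "real \<Rightarrow> real \<Rightarrow> bool" where "Fib s x \<longleftrightarrow> H s \<le> x \<and> x \<le> Hp s"

lemma mass_cong: "(\<And>j n. j < K \<Longrightarrow> p j (Suc n) \<in> I \<longleftrightarrow> p j (Suc n) \<in> J) \<Longrightarrow> mass I = mass J"
proof -
  assume a: "\<And>j n. j < K \<Longrightarrow> p j (Suc n) \<in> I \<longleftrightarrow> p j (Suc n) \<in> J"
  have "cntm I n = cntm J n" for n unfolding cntm_def using a by metis
  then show ?thesis unfolding mass_def by simp
qed

lemma H_le_Hp: "H s \<le> Hp s"
  unfolding H_def Hp_def by (rule mass_mono) auto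

lemma H_mono: "s \<le> t \<Longrightarrow> H s \<le> H t"
  unfolding H_def by (rule mass_mono) auto

lemma Hp_mono: "s \<le> t \<Longrightarrow> Hp s \<le> Hp t"
  unfolding Hp_def by (rule mass_mono) auto

lemma Hp_le_H: "s < t \<Longrightarrow> Hp s \<le> H t"
  unfolding H_def Hp_def by (rule mass_mono) auto

lemma H_minus_Hp: "s < t \<Longrightarrow> H t - Hp s = mass {s<..<t}"
proof -
  assume "s < t"
  then have "{..<t} - {..s} = {s<..<t}" "{..s} \<subseteq> {..<t}" by auto
  then show ?thesis unfolding H_def Hp_def by (metis mass_diff)
qed

lemma Hp_minus_Hp: "s \<le> t \<Longrightarrow> Hp t - Hp s = mass {s<..t}"
proof -
  assume "s \<le> t"
  then have "{..t} - {..s} = {s<..t}" "{..s} \<subseteq> {..t}" by auto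
  then show ?thesis unfolding Hp_def by (metis mass_diff)
qed

lemma H_minus_H: "s \<le> t \<Longrightarrow> H t - H s = mass {s..<t}"
proof -
  assume "s \<le> t"
  then have "{..<t} - {..<s} = {s..<t}" "{..<s} \<subseteq> {..<t}" by auto
  then show ?thesis unfolding H_def by (metis mass_diff)
qed

lemma Hp_minus_H: "Hp s - H s = mass {s}"
proof -
  have "{..s} - {..<s} = {s}" "{..<s} \<subseteq> {..s}" by auto
  then show ?thesis unfolding H_def Hp_def by (metis mass_diff)
qed

lemma Hp_lt_H: "0 \<le> s \<Longrightarrow> s < t \<Longrightarrow> t \<le> 1 \<Longrightarrow> Hp s < H t"
  using H_minus_Hp[of s t] mass_dense[of s t] by simp

lemma Hp0: "Hp 0 = 0"
  unfolding Hp_def using p_range p_ne_0 by (intro mass_zero) (metis atMost_iff order_antisym)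

lemma H0: "H 0 = 0"
  using H_le_Hp[of 0] Hp0 H_def mass_nonneg by (metis order_antisym)

lemma H1: "H 1 = real K"
proof -
  have "mass {..<1} = mass UNIV" using p_range by (intro mass_cong) auto
  then show ?thesis unfolding H_def mass_UNIV .
qed

lemma Hp1: "Hp 1 = real K"
proof -
  have "mass {..1} = mass UNIV" using p_range by (intro mass_cong) (auto simp: less_imp_le)
  then show ?thesis unfolding Hp_def mass_UNIV .
qed

lemma H_range: "0 \<le> H s" "H s \<le> real K"
  using mass_nonneg mass_mono[of "{..<s}" UNIV] mass_UNIV unfolding H_def by auto

lemma Hp_range: "0 \<le> Hp s" "Hp s \<le> real K"
  using mass_nonneg mass_mono[of "{..s}" UNIV] mass_UNIV unfolding Hp_def by auto

lemma u0: "u 0 = 0" unfolding u_def using K1 y0 by simp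
lemma uN: "u (Suc K) = 1" unfolding u_def by simp
lemma uK: "u K = 1 - \<theta>" unfolding u_def by simp

lemma u_mono: "i < j \<Longrightarrow> j \<le> Suc K \<Longrightarrow> u i < u j"
  unfolding u_def using ymono ylast th0 th1 by (auto, smt (verit) ylast)

lemma u_range: "i \<le> Suc K \<Longrightarrow> 0 \<le> u i \<and> u i \<le> 1"
  unfolding u_def using y_range th0 th1 by (auto simp: less_imp_le)

lemma u_mono_le: "i \<le> j \<Longrightarrow> j \<le> Suc K \<Longrightarrow> u i \<le> u j"
  using u_mono by (cases "i = j") (auto simp: less_imp_le)

lemma p_ne_u: "j < K \<Longrightarrow> i \<le> Suc K \<Longrightarrow> p j (Suc n) \<noteq> u i"
  unfolding u_def using p_ne_y p_ne_w p_range by (auto, metis less_irrefl)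

lemma mass_u: "i \<le> Suc K \<Longrightarrow> mass {u i} = 0"
  using p_ne_u by (intro mass_zero) auto

lemma Hp_u: "i \<le> Suc K \<Longrightarrow> Hp (u i) = H (u i)"
  using Hp_minus_H[of "u i"] mass_u by simp

lemma H_left:
  assumes "e > 0"
  shows "\<exists>\<eta>>0. \<forall>r. s - \<eta> < r \<longrightarrow> r < s \<longrightarrow> H s - e < H r"
proof -
  obtain M where M: "(1/2::real)^M < e / (real K + 1)"
    using real_arch_pow_inv[of "e / (real K + 1)" "1/2"] assms by auto
  have KM: "real K * (1/2)^M < e"
  proof -
    have "real K * (1/2::real)^M \<le> (real K + 1) * (1/2)^M" by simp
    also have "\<dots> < (real K + 1) * (e / (real K + 1))"
      using M by (intro mult_strict_left_mono) auto
    also have "\<dots> = e" by simp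
    finally show ?thesis .
  qed
  define F where "F = (\<lambda>(j, n). p j (Suc n)) ` ({..<K} \<times> {..<M})"
  have "finite F" unfolding F_def by auto
  then obtain \<eta> where \<eta>: "\<eta> > 0" "\<And>x. x \<in> F \<Longrightarrow> x \<noteq> s \<Longrightarrow> \<eta> \<le> dist s x"
    using finite_set_avoid[of F s] by blast
  have "s - \<eta> < r \<longrightarrow> r < s \<longrightarrow> H s - e < H r" for r
  proof (intro impI)
    assume r: "s - \<eta> < r" "r < s"
    have "p j (Suc n) \<notin> {r..<s}" if "j < K" "n < M" for j n
    proof
      assume q: "p j (Suc n) \<in> {r..<s}"
      have "p j (Suc n) \<in> F" unfolding F_def using that by force
      then have "\<eta> \<le> dist s (p j (Suc n))" using \<eta>(2) q by auto
      then show False using q r by (auto simp: dist_real_def)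
    qed
    then have "mass {r..<s} \<le> real K * (1/2)^M" by (intro mass_tail) auto
    then show "H s - e < H r" using H_minus_H[of r s] r KM by simp
  qed
  then show ?thesis using \<eta>(1) by blast
qed

lemma Hp_right:
  assumes "e > 0"
  shows "\<exists>\<eta>>0. \<forall>r. s < r \<longrightarrow> r < s + \<eta> \<longrightarrow> Hp r < Hp s + e"
proof -
  obtain M where M: "(1/2::real)^M < e / (real K + 1)"
    using real_arch_pow_inv[of "e / (real K + 1)" "1/2"] assms by auto
  have KM: "real K * (1/2)^M < e"
  proof -
    have "real K * (1/2::real)^M \<le> (real K + 1) * (1/2)^M" by simp
    also have "\<dots> < (real K + 1) * (e / (real K + 1))"
      using M by (intro mult_strict_left_mono) auto
    also have "\<dots> = e" by simp
    finally show ?thesis .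
  qed
  define F where "F = (\<lambda>(j, n). p j (Suc n)) ` ({..<K} \<times> {..<M})"
  have "finite F" unfolding F_def by auto
  then obtain \<eta> where \<eta>: "\<eta> > 0" "\<And>x. x \<in> F \<Longrightarrow> x \<noteq> s \<Longrightarrow> \<eta> \<le> dist s x"
    using finite_set_avoid[of F s] by blast
  have "s < r \<longrightarrow> r < s + \<eta> \<longrightarrow> Hp r < Hp s + e" for r
  proof (intro impI)
    assume r: "s < r" "r < s + \<eta>"
    have "p j (Suc n) \<notin> {s<..r}" if "j < K" "n < M" for j n
    proof
      assume q: "p j (Suc n) \<in> {s<..r}"
      have "p j (Suc n) \<in> F" unfolding F_def using that by force
      then have "\<eta> \<le> dist s (p j (Suc n))" using \<eta>(2) q by auto
      then show False using q r by (auto simp: dist_real_def)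
    qed
    then have "mass {s<..r} \<le> real K * (1/2)^M" by (intro mass_tail) auto
    then show "Hp r < Hp s + e" using Hp_minus_Hp[of s r] r KM by simp
  qed
  then show ?thesis using \<eta>(1) by blast
qed

lemma fib_unique:
  assumes "s \<in> {0..1}" "t \<in> {0..1}" "Fib s x" "Fib t x"
  shows "s = t"
proof (rule ccontr)
  assume "s \<noteq> t"
  then consider "s < t" | "t < s" by linarith
  then show False
  proof cases
    case 1 then have "Hp s < H t" using assms Hp_lt_H by auto
    then show False using assms unfolding Fib_def by auto
  next
    case 2 then have "Hp t < H s" using assms Hp_lt_H by auto
    then show False using assms unfolding Fib_def by auto
  qed
qed

lemma fib_exists:
  assumes "0 \<le> x" "x \<le> real K"
  shows "\<exists>s\<in>{0..1}. Fib s x"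
proof -
  define S where "S = {t \<in> {0..1}. H t \<le> x}"
  have "0 \<in> S" unfolding S_def using H0 assms by simp
  have bdd: "bdd_above S" unfolding S_def by (auto intro: bdd_aboveI[of _ 1])
  have "S \<noteq> {}" using \<open>0 \<in> S\<close> by auto
  define s where "s = Sup S"
  have s0: "0 \<le> s" unfolding s_def using cSup_upper[OF \<open>0 \<in> S\<close> bdd] .
  have s1: "s \<le> 1" unfolding s_def using \<open>S \<noteq> {}\<close> by (intro cSup_least) (auto simp: S_def)
  have Hs: "H s \<le> x"
  proof (rule ccontr)
    assume "\<not> H s \<le> x"
    then have e: "H s - x > 0" by simp
    obtain \<eta> where \<eta>: "\<eta> > 0" "\<And>r. s - \<eta> < r \<Longrightarrow> r < s \<Longrightarrow> H s - (H s - x) < H r"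
      using H_left[OF e, of s] by blast
    have "s - \<eta> < Sup S" using \<eta>(1) s_def by simp
    then obtain t where t: "t \<in> S" "s - \<eta> < t" using less_cSup_iff[OF _ bdd] \<open>0 \<in> S\<close> by blast
    have "t \<le> s" unfolding s_def using cSup_upper[OF t(1) bdd] .
    show False
    proof (cases "t = s")
      case True then show False using t \<open>\<not> H s \<le> x\<close> unfolding S_def by auto
    next
      case False then have "t < s" using \<open>t \<le> s\<close> by simp
      then have "x < H t" using \<eta>(2)[OF t(2)] by simp
      then show False using t unfolding S_def by auto
    qed
  qed
  have Hps: "x \<le> Hp s"
  proof (cases "s = 1")
    case True then show ?thesis using Hp1 assms by simp
  next
    case False
    then have s1': "s < 1" using s1 by simp
    show ?thesis
    proof (rule ccontr)
      assume "\<not> x \<le> Hp s"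
      then have e: "x - Hp s > 0" by simp
      obtain \<eta> where \<eta>: "\<eta> > 0" "\<And>r. s < r \<Longrightarrow> r < s + \<eta> \<Longrightarrow> Hp r < Hp s + (x - Hp s)"
        using Hp_right[OF e, of s] by blast
      define r where "r = s + min \<eta> (1 - s) / 2"
      have "min \<eta> (1 - s) \<le> 1 - s" "min \<eta> (1 - s) \<le> \<eta>" "min \<eta> (1 - s) > 0" using \<eta>(1) s1' by auto
      then have r: "s < r" "r < s + \<eta>" "r \<le> 1" unfolding r_def by (auto simp: field_simps)
      have "H r \<le> x" using \<eta>(2)[OF r(1,2)] H_le_Hp[of r] by simp
      then have "r \<in> S" unfolding S_def using r s0 by simp
      then have "r \<le> s" unfolding s_def using cSup_upper bdd by blast
      then show False using r by simp
    qed
  qed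
  show ?thesis using Hs Hps s0 s1 unfolding Fib_def by auto
qed

end



lemma index_exists:
  fixes c :: "nat \<Rightarrow> real"
  assumes "1 \<le> n" "c 0 \<le> x"
  shows "\<exists>k\<in>{1..n}. c (k - 1) \<le> x \<and> (x < c k \<or> k = n)"
  using assms(1)
proof (induction n)
  case 0 then show ?case by simp
next
  case (Suc n)
  show ?case
  proof (cases "n = 0")
    case True then show ?thesis using assms(2) by auto
  next
    case False
    have "\<exists>k\<in>{1..n}. c (k - 1) \<le> x \<and> (x < c k \<or> k = n)" using Suc.IH False by simp
    then obtain k where k: "k \<in> {1..n}" "c (k - 1) \<le> x" "x < c k \<or> k = n" by blast
    show ?thesis
    proof (cases "x < c k")
      case True then show ?thesis using k by auto
    next
      case False then have "k = n" "c n \<le> x" using k by auto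
      then show ?thesis by (intro bexI[of _ "Suc n"]) auto
    qed
  qed
qed

context cons begin

definition c :: "nat \<Rightarrow> real" where "c i = H (u i)"
definition dd :: "nat \<Rightarrow> real" where "dd k = (if k = Suc K then \<theta> - 1 else \<theta>)"
definition bb :: "nat \<Rightarrow> real" where "bb k = Hp (u (k - 1) + dd k) - c (k - 1) / 2"
definition g :: "nat \<Rightarrow> real \<Rightarrow> real" where "g k x = x / 2 + bb k"
definition f :: "real \<Rightarrow> real" where
  "f x = x / 2 + bb 1 + (\<Sum>i\<in>{1..K}. if c i \<le> x then bb (Suc i) - bb i else 0)"
definition lo :: "nat \<Rightarrow> real" where "lo k = (if k = 1 then -1 else c (k - 1))"
definition hi :: "nat \<Rightarrow> real" where "hi k = (if k = Suc K then real K + 1 else c k)"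
definition P :: "nat \<Rightarrow> real set" where "P k = {0..real K} \<inter> {lo k<..<hi k}"

lemma c0: "c 0 = 0" unfolding c_def u0 H0 ..
lemma cN: "c (Suc K) = real K" unfolding c_def uN H1 ..
lemma c_Hp: "i \<le> Suc K \<Longrightarrow> c i = Hp (u i)" unfolding c_def using Hp_u by simp

lemma c_mono: "i < j \<Longrightarrow> j \<le> Suc K \<Longrightarrow> c i < c j"
proof -
  assume a: "i < j" "j \<le> Suc K"
  have "c i = Hp (u i)" using a c_Hp by simp
  also have "\<dots> < H (u j)" using a u_mono u_range by (intro Hp_lt_H) auto
  finally show ?thesis unfolding c_def .
qed

lemma c_mono_le: "i \<le> j \<Longrightarrow> j \<le> Suc K \<Longrightarrow> c i \<le> c j"
  using c_mono by (cases "i = j") (auto simp: less_imp_le)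

lemma c_range: "i \<le> Suc K \<Longrightarrow> 0 \<le> c i \<and> c i \<le> real K"
  using c_mono_le[of 0 i] c_mono_le[of i "Suc K"] c0 cN by auto

lemma f_eq:
  assumes k: "1 \<le> k" "k \<le> Suc K" and x: "c (k - 1) \<le> x" "x < c k \<or> k = Suc K"
  shows "f x = g k x"
proof -
  have set: "{i\<in>{1..K}. c i \<le> x} = {1..k - 1}"
  proof (intro set_eqI iffI)
    fix i assume i: "i \<in> {i\<in>{1..K}. c i \<le> x}"
    show "i \<in> {1..k - 1}"
    proof (rule ccontr)
      assume "i \<notin> {1..k - 1}"
      then have "k \<le> i" "i \<le> K" using i by auto
      then have "c k \<le> c i" "k \<noteq> Suc K" using c_mono_le by auto
      then show False using x i by auto
    qed
  next
    fix i assume "i \<in> {1..k - 1}"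
    then show "i \<in> {i\<in>{1..K}. c i \<le> x}" using c_mono_le[of i "k - 1"] x k by force
  qed
  have "(\<Sum>i\<in>{1..K}. if c i \<le> x then bb (Suc i) - bb i else 0) = (\<Sum>i\<in>{i\<in>{1..K}. c i \<le> x}. bb (Suc i) - bb i)"
    by (rule sum.inter_filter[symmetric]) simp
  also have "\<dots> = (\<Sum>i = 1..k - 1. bb (Suc i) - bb i)" unfolding set ..
  also have "\<dots> = bb k - bb 1" using sum_Suc_diff[of 1 "k - 1" bb] k by simp
  finally show ?thesis unfolding f_def g_def by simp
qed

lemma piece_index:
  assumes "0 \<le> x"
  shows "\<exists>k\<in>{1..Suc K}. c (k - 1) \<le> x \<and> (x < c k \<or> k = Suc K)"
  using index_exists[of "Suc K" c x] assms c0 by auto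

lemma u_piece_index:
  assumes "0 \<le> r"
  shows "\<exists>k\<in>{1..Suc K}. u (k - 1) \<le> r \<and> (r < u k \<or> k = Suc K)"
  using index_exists[of "Suc K" u r] assms u0 by auto

lemma y_not_in_piece:
  assumes "1 \<le> k" "k \<le> Suc K" "u (k - 1) < t" "t < u k" "j < K"
  shows "y j \<noteq> t"
proof
  assume "y j = t"
  then have "u j = t" unfolding u_def using assms by simp
  then have "k - 1 < j" "j < k" using u_mono_le[of j "k - 1"] u_mono_le[of k j] assms by force+
  then show False by simp
qed

lemma rot_piece:
  assumes "1 \<le> k" "k \<le> Suc K" "u (k - 1) \<le> s" "s < u k"
  shows "frac (s + \<theta>) = s + dd k"
proof -
  have "0 \<le> u (k - 1)" "u k \<le> 1" using assms u_range[of "k - 1"] u_range[of k] by auto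
  then have "0 \<le> s" "s < 1" using assms by auto
  moreover have "s < 1 - \<theta> \<longleftrightarrow> k \<noteq> Suc K"
  proof
    assume "s < 1 - \<theta>" then show "k \<noteq> Suc K" using assms uK by auto
  next
    assume "k \<noteq> Suc K" then have "u k \<le> u K" using assms u_mono_le by auto
    then show "s < 1 - \<theta>" using assms uK by simp
  qed
  ultimately show ?thesis using frac_shift[of s] unfolding dd_def by auto
qed

lemma ident_a:
  assumes k: "1 \<le> k" "k \<le> Suc K" and s: "u (k - 1) \<le> s" "s < u k"
  shows "g k (Hp s) = Hp (s + dd k)"
proof (cases "s = u (k - 1)")
  case True
  then have "Hp s = c (k - 1)" using c_Hp k by simp
  then show ?thesis unfolding g_def bb_def using True by simp
next
  case False
  define U where "U = u (k - 1)"
  have Us: "U < s" using False s U_def by simp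
  have U0: "0 \<le> U" unfolding U_def using u_range k by simp
  have uk: "u k \<le> 1" using u_range k by simp
  have ukK: "k \<noteq> Suc K \<Longrightarrow> u k \<le> 1 - \<theta>" using u_mono_le[of k K] uK k by simp
  have UK: "k = Suc K \<Longrightarrow> U = 1 - \<theta>" unfolding U_def using uK by simp
  have sh: "mass {U + dd k<..s + dd k} = mass {U<..s} / 2"
  proof (rule mass_shift)
    fix x :: real assume x: "0 \<le> x" "x < 1"
    show "frac (x + \<theta>) \<in> {U + dd k<..s + dd k} \<longleftrightarrow> x \<in> {U<..s}"
      using frac_shift[OF x] x Us U0 uk ukK UK s th0 th1 unfolding dd_def U_def[symmetric]
      by (cases "k = Suc K") auto
  next
    fix j assume "j < K"
    then show "y j \<notin> {U<..s}" using y_not_in_piece[OF k, of _ j] s U_def by fastforce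
  qed
  have "Hp (s + dd k) - Hp (U + dd k) = mass {U + dd k<..s + dd k}" using Us by (intro Hp_minus_Hp) simp
  moreover have "Hp s - Hp U = mass {U<..s}" using Us by (intro Hp_minus_Hp) simp
  moreover have "Hp U = c (k - 1)" unfolding U_def using c_Hp k by simp
  ultimately show ?thesis unfolding g_def bb_def U_def[symmetric] using sh by simp
qed

lemma ident_b:
  assumes k: "1 \<le> k" "k \<le> Suc K" and s: "u (k - 1) < s" "s \<le> u k"
  shows "g k (H s) = H (s + dd k)"
proof -
  define U where "U = u (k - 1)"
  have Us: "U < s" using s U_def by simp
  have U0: "0 \<le> U" unfolding U_def using u_range k by simp
  have uk: "u k \<le> 1" using u_range k by simp
  have ukK: "k \<noteq> Suc K \<Longrightarrow> u k \<le> 1 - \<theta>" using u_mono_le[of k K] uK k by simp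
  have UK: "k = Suc K \<Longrightarrow> U = 1 - \<theta>" unfolding U_def using uK by simp
  have sh: "mass {U + dd k<..<s + dd k} = mass {U<..<s} / 2"
  proof (rule mass_shift)
    fix x :: real assume x: "0 \<le> x" "x < 1"
    show "frac (x + \<theta>) \<in> {U + dd k<..<s + dd k} \<longleftrightarrow> x \<in> {U<..<s}"
      using frac_shift[OF x] x Us U0 uk ukK UK s th0 th1 unfolding dd_def U_def[symmetric]
      by (cases "k = Suc K") auto
  next
    fix j assume j: "j < K"
    show "y j \<notin> {U<..<s}"
    proof
      assume "y j \<in> {U<..<s}"
      then have "u (k - 1) < y j" "y j < u k" using s U_def by auto
      then show False using y_not_in_piece[OF k _ _ j] by blast
    qed
  qed
  have "H (s + dd k) - Hp (U + dd k) = mass {U + dd k<..<s + dd k}" using Us by (intro H_minus_Hp) simp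
  moreover have "H s - Hp U = mass {U<..<s}" using Us by (intro H_minus_Hp) simp
  moreover have "Hp U = c (k - 1)" unfolding U_def using c_Hp k by simp
  ultimately show ?thesis unfolding g_def bb_def U_def[symmetric] using sh by simp
qed

end



context cons begin

lemma fib_cut: "i \<le> Suc K \<Longrightarrow> Fib (u i) x \<Longrightarrow> x = c i"
  unfolding Fib_def c_def using Hp_u by fastforce

lemma fib_cut': "i \<le> Suc K \<Longrightarrow> Fib (u i) (c i)"
  unfolding Fib_def c_def using Hp_u by fastforce

lemma g_mono: "x \<le> x' \<Longrightarrow> g k x \<le> g k x'"
  unfolding g_def by simp

lemma g_fib:
  assumes k: "1 \<le> k" "k \<le> Suc K" and s: "u (k - 1) \<le> s" "s \<le> u k" and x: "Fib s x"
  shows "Fib (s + dd k) (g k x)"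
proof -
  have ul: "u (k - 1) < u k" using u_mono k by simp
  show ?thesis
  proof (cases "s = u (k - 1)")
    case True
    then have "x = c (k - 1)" using fib_cut k x by simp
    then have "g k x = Hp (s + dd k)" using ident_a[OF k, of s] True ul c_Hp k by simp
    then show ?thesis unfolding Fib_def using H_le_Hp by simp
  next
    case False
    show ?thesis
    proof (cases "s = u k")
      case True
      then have "x = c k" using fib_cut k x by simp
      then have "g k x = H (s + dd k)" using ident_b[OF k, of s] True ul unfolding c_def by simp
      then show ?thesis unfolding Fib_def using H_le_Hp by simp
    next
      case False
      have s': "u (k - 1) < s" "s < u k" using s False \<open>s \<noteq> u (k - 1)\<close> by auto
      have "g k (H s) \<le> g k x" "g k x \<le> g k (Hp s)" using x g_mono unfolding Fib_def by auto
      then show ?thesis unfolding Fib_def using ident_a[OF k, of s] ident_b[OF k, of s] s' by simp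
    qed
  qed
qed

lemma f_step:
  assumes s: "0 \<le> s" "s \<le> 1" and x: "Fib s x"
  shows "\<exists>k\<in>{1..Suc K}. f x = g k x \<and> u (k - 1) \<le> s \<and> s \<le> u k \<and> frac (s + \<theta>) = s + dd k"
proof -
  have x0: "0 \<le> x" using x H_range unfolding Fib_def by (meson order_trans)
  obtain k where k: "k \<in> {1..Suc K}" "c (k - 1) \<le> x" "x < c k \<or> k = Suc K"
    using piece_index[OF x0] by blast
  have k1: "1 \<le> k" "k \<le> Suc K" using k by auto
  have fx: "f x = g k x" using f_eq k1 k by simp
  have s1: "u (k - 1) \<le> s"
  proof (rule ccontr)
    assume "\<not> u (k - 1) \<le> s"
    then have "Hp s < H (u (k - 1))" using s u_range k1 by (intro Hp_lt_H) auto
    then show False using x k(2) unfolding Fib_def c_def by simp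
  qed
  have s2: "s < u k \<or> (k = Suc K \<and> s = 1)"
  proof (rule ccontr)
    assume a: "\<not> (s < u k \<or> (k = Suc K \<and> s = 1))"
    then have "u k \<le> s" by simp
    show False
    proof (cases "k = Suc K")
      case True then show False using a s uN by simp
    next
      case False
      then have "x < c k" using k by simp
      moreover have "c k \<le> H s" using H_mono[OF \<open>u k \<le> s\<close>] unfolding c_def .
      ultimately show False using x unfolding Fib_def by simp
    qed
  qed
  have rot: "frac (s + \<theta>) = s + dd k"
    using s2 proof
    assume "s < u k" then show ?thesis using rot_piece k1 s1 by simp
  next
    assume "k = Suc K \<and> s = 1"
    moreover have "frac (1 + \<theta>) = \<theta>" using frac_1_eq[of \<theta>] th0 th1 by (simp add: add.commute)
    ultimately show ?thesis unfolding dd_def by simp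
  qed
  have "s \<le> u k" using s2 uN by auto
  then show ?thesis using fx s1 rot k by blast
qed

lemma f_fib:
  assumes s: "0 \<le> s" "s \<le> 1" and x: "Fib s x"
  shows "Fib (frac (s + \<theta>)) (f x)"
proof -
  obtain k where k: "k\<in>{1..Suc K}" "f x = g k x" "u (k - 1) \<le> s" "s \<le> u k" "frac (s + \<theta>) = s + dd k"
    using f_step[OF assms] by blast
  then show ?thesis using g_fib[of k s x] x by auto
qed

lemma f_Lam:
  assumes s: "0 \<le> s" "s \<le> 1" and x: "x = H s \<or> x = Hp s"
  shows "f x = H (frac (s + \<theta>)) \<or> f x = Hp (frac (s + \<theta>))"
proof -
  have fx: "Fib s x" using x H_le_Hp unfolding Fib_def by auto
  obtain k where k: "k\<in>{1..Suc K}" "f x = g k x" "u (k - 1) \<le> s" "s \<le> u k" "frac (s + \<theta>) = s + dd k"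
    using f_step[OF s fx] by blast
  have k1: "1 \<le> k" "k \<le> Suc K" using k by auto
  have ul: "u (k - 1) < u k" using u_mono k1 by simp
  show ?thesis
  proof (cases "s = u (k - 1)")
    case True
    then have "x = c (k - 1)" using fib_cut k1 fx by simp
    then have "g k x = Hp (s + dd k)" using ident_a[OF k1, of s] True ul c_Hp k1 by simp
    then show ?thesis using k by simp
  next
    case False
    then have s1: "u (k - 1) < s" using k by simp
    show ?thesis using x
    proof
      assume "x = H s" then show ?thesis using ident_b[OF k1 s1 k(4)] k by simp
    next
      assume xh: "x = Hp s"
      show ?thesis
      proof (cases "s = u k")
        case True
        then have "x = H s" using xh Hp_u k1 by simp
        then show ?thesis using ident_b[OF k1 s1 k(4)] k by simp
      next
        case False
        then show ?thesis using ident_a[OF k1 k(3)] xh k by simp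
      qed
    qed
  qed
qed

lemma frac_range: "0 \<le> frac a" "frac a \<le> 1"
  using frac_lt_1[of a] by auto

lemma f_iter_fib:
  assumes s: "0 \<le> s" "s < 1" and x: "Fib s x"
  shows "Fib (frac (s + real n * \<theta>)) ((f ^^ n) x)"
proof (induction n)
  case 0
  show ?case using x s by simp
next
  case (Suc n)
  have "Fib (frac (frac (s + real n * \<theta>) + \<theta>)) (f ((f ^^ n) x))"
    using f_fib[OF frac_range Suc] .
  then show ?case by (simp add: algebra_simps)
qed

end



lemma closure_UN_finite: "finite I \<Longrightarrow> closure (\<Union>i\<in>I. A i) = (\<Union>i\<in>I. closure (A i))"
  by (induction I rule: finite_induct) auto

lemma avoid_finite: "(a::real) < b \<Longrightarrow> finite F \<Longrightarrow> \<exists>r\<in>{a<..<b}. r \<notin> F"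
  using infinite_Ioo[of a b] by (metis finite_subset subsetI)

context cons begin

definition Lam :: "real set" where "Lam = {x. \<exists>s\<in>{0..1}. x = H s \<or> x = Hp s}"

lemma Lam_range: "x \<in> Lam \<Longrightarrow> 0 \<le> x \<and> x \<le> real K"
  unfolding Lam_def using H_range Hp_range by auto

lemma fib_range: "Fib s x \<Longrightarrow> 0 \<le> x \<and> x \<le> real K"
  unfolding Fib_def using H_range[of s] Hp_range[of s] by linarith

lemma f_range: "0 \<le> x \<Longrightarrow> x \<le> real K \<Longrightarrow> 0 \<le> f x \<and> f x \<le> real K"
  using fib_exists f_fib fib_range by (metis atLeastAtMost_iff)

lemma orbit_approx:
  assumes x: "0 \<le> x" "x \<le> real K" and ab: "0 \<le> a" "a < b" "b \<le> 1"
  shows "\<exists>t\<ge>t0. \<exists>s'\<in>{a<..<b}. Fib s' ((f ^^ t) x)"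
proof -
  obtain s where s: "s \<in> {0..1}" "Fib s x" using fib_exists x by blast
  define s1 where "s1 = frac (s + \<theta>)"
  have s1: "Fib s1 (f x)" "0 \<le> s1" "s1 < 1" unfolding s1_def using f_fib s frac_lt_1 by auto
  obtain t where t: "t \<ge> t0" "frac (s1 + real t * \<theta>) \<in> {a<..<b}" using density[OF ab] by blast
  have "Fib (frac (s1 + real t * \<theta>)) ((f ^^ t) (f x))" using f_iter_fib[OF s1(2,3) s1(1)] .
  moreover have "(f ^^ t) (f x) = (f ^^ Suc t) x" by (metis comp_apply funpow_Suc_right)
  ultimately show ?thesis using t by (intro exI[of _ "Suc t"]) auto
qed

lemma left_approx:
  assumes x: "0 \<le> x" "x \<le> real K" and s: "0 < s" "s \<le> 1" and e: "e > 0"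
  shows "\<exists>t\<ge>t0. H s - e < (f ^^ t) x \<and> (f ^^ t) x < H s"
proof -
  obtain \<eta> where \<eta>: "\<eta> > 0" "\<And>r. s - \<eta> < r \<Longrightarrow> r < s \<Longrightarrow> H s - e < H r" using H_left[OF e, of s] by blast
  have "0 \<le> s - min \<eta> s" "s - min \<eta> s < s" using \<eta>(1) s by auto
  then obtain t s' where t: "t \<ge> t0" "s' \<in> {s - min \<eta> s<..<s}" "Fib s' ((f ^^ t) x)"
    using orbit_approx[OF x, of "s - min \<eta> s" s t0] s by blast
  have "H s - e < H s'" using \<eta>(2) t(2) by auto
  moreover have "Hp s' < H s" using t(2) s by (intro Hp_lt_H) auto
  ultimately show ?thesis using t unfolding Fib_def by force
qed

lemma right_approx:
  assumes x: "0 \<le> x" "x \<le> real K" and s: "0 \<le> s" "s < 1" and e: "e > 0"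
  shows "\<exists>t\<ge>t0. Hp s < (f ^^ t) x \<and> (f ^^ t) x < Hp s + e"
proof -
  obtain \<eta> where \<eta>: "\<eta> > 0" "\<And>r. s < r \<Longrightarrow> r < s + \<eta> \<Longrightarrow> Hp r < Hp s + e" using Hp_right[OF e, of s] by blast
  have "s < s + min \<eta> (1 - s)" "s + min \<eta> (1 - s) \<le> 1" using \<eta>(1) s by auto
  then obtain t s' where t: "t \<ge> t0" "s' \<in> {s<..<s + min \<eta> (1 - s)}" "Fib s' ((f ^^ t) x)"
    using orbit_approx[OF x, of s "s + min \<eta> (1 - s)" t0] s by blast
  have "Hp s' < Hp s + e" using \<eta>(2) t(2) by auto
  moreover have "Hp s < H s'" using t(2) s \<open>s + min \<eta> (1 - s) \<le> 1\<close> by (intro Hp_lt_H) auto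
  ultimately show ?thesis using t unfolding Fib_def by force
qed

lemma Lam_orbit_approx:
  assumes x: "0 \<le> x" "x \<le> real K" and z: "z \<in> Lam" and e: "e > 0"
  shows "\<exists>t. \<bar>(f ^^ t) x - z\<bar> < e"
proof -
  obtain s where s: "s \<in> {0..1}" "z = H s \<or> z = Hp s" using z unfolding Lam_def by blast
  consider "z = H s" "0 < s" | "z = H s" "s = 0" | "z = Hp s" "s < 1" | "z = Hp s" "s = 1"
    using s by force
  then show ?thesis
  proof cases
    case 1 then show ?thesis using left_approx[OF x _ _ e, of s 0] s by (smt (verit, best) atLeastAtMost_iff)
  next
    case 2 then have "z = Hp 0" using H0 Hp0 by simp
    moreover obtain t where "Hp 0 < (f^^t) x" "(f^^t) x < Hp 0 + e" using right_approx[OF x _ _ e, of 0 0] by auto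
    ultimately show ?thesis by (intro exI[of _ t]) auto
  next
    case 3 then show ?thesis using right_approx[OF x _ _ e, of s 0] s by (smt (verit, best) atLeastAtMost_iff)
  next
    case 4 then have "z = H 1" using H1 Hp1 by simp
    moreover obtain t where "H 1 - e < (f^^t) x" "(f^^t) x < H 1" using left_approx[OF x _ _ e, of 1 0] by auto
    ultimately show ?thesis by (intro exI[of _ t]) auto
  qed
qed

lemma Lam_self_approx:
  assumes z: "z \<in> Lam" and e: "e > 0" and F: "finite F"
  shows "\<exists>r\<in>{0<..<1}. r \<notin> F \<and> (\<exists>z'. (z' = H r \<or> z' = Hp r) \<and> z' \<noteq> z \<and> \<bar>z' - z\<bar> < e)"
proof -
  obtain s where s: "s \<in> {0..1}" "z = H s \<or> z = Hp s" using z unfolding Lam_def by blast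
  have left: "\<exists>r\<in>{0<..<1}. r \<notin> F \<and> (\<exists>z'. (z' = H r \<or> z' = Hp r) \<and> z' \<noteq> z \<and> \<bar>z' - z\<bar> < e)"
    if "z = H s1" "0 < s1" "s1 \<le> 1" for s1
  proof -
    obtain \<eta> where \<eta>: "\<eta> > 0" "\<And>r. s1 - \<eta> < r \<Longrightarrow> r < s1 \<Longrightarrow> H s1 - e < H r" using H_left[OF e, of s1] by blast
    have "s1 - min \<eta> s1 < s1" using \<eta>(1) that by auto
    then obtain r where r: "r \<in> {s1 - min \<eta> s1<..<s1}" "r \<notin> F" using avoid_finite F by blast
    have r01: "0 < r" "r < 1" using r that by auto
    have "H s1 - e < H r" using \<eta>(2) r by auto
    moreover have "H r \<le> Hp r" "Hp r < H s1" using r that H_le_Hp by (auto intro: Hp_lt_H)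
    ultimately show ?thesis using r r01 that by (intro bexI[of _ r]) (auto intro!: exI[of _ "H r"])
  qed
  have right: "\<exists>r\<in>{0<..<1}. r \<notin> F \<and> (\<exists>z'. (z' = H r \<or> z' = Hp r) \<and> z' \<noteq> z \<and> \<bar>z' - z\<bar> < e)"
    if "z = Hp s1" "0 \<le> s1" "s1 < 1" for s1
  proof -
    obtain \<eta> where \<eta>: "\<eta> > 0" "\<And>r. s1 < r \<Longrightarrow> r < s1 + \<eta> \<Longrightarrow> Hp r < Hp s1 + e" using Hp_right[OF e, of s1] by blast
    have "s1 < s1 + min \<eta> (1 - s1)" "s1 + min \<eta> (1 - s1) \<le> 1" using \<eta>(1) that by auto
    then obtain r where r: "r \<in> {s1<..<s1 + min \<eta> (1 - s1)}" "r \<notin> F" using avoid_finite F by blast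
    have r01: "0 < r" "r < 1" using r that \<open>s1 + min \<eta> (1 - s1) \<le> 1\<close> by auto
    have "Hp r < Hp s1 + e" using \<eta>(2) r by auto
    moreover have "H r \<le> Hp r" "Hp s1 < H r" using r r01 that H_le_Hp by (auto intro: Hp_lt_H)
    ultimately show ?thesis using r r01 that by (intro bexI[of _ r]) (auto intro!: exI[of _ "Hp r"])
  qed
  consider "z = H s" "0 < s" | "z = H s" "s = 0" | "z = Hp s" "s < 1" | "z = Hp s" "s = 1"
    using s by force
  then show ?thesis
  proof cases
    case 1 then show ?thesis using left s by auto
  next
    case 2 then have "z = Hp 0" using H0 Hp0 by simp
    then show ?thesis using right by auto
  next
    case 3 then show ?thesis using right s by auto
  next
    case 4 then have "z = H 1" using H1 Hp1 by simp
    then show ?thesis using left by auto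
  qed
qed

lemma gap_not_Lam:
  assumes q: "q \<in> {0..1}" and z: "H q < z" "z < Hp q"
  shows "z \<notin> Lam"
proof
  assume "z \<in> Lam"
  then obtain r where r: "r \<in> {0..1}" "z = H r \<or> z = Hp r" unfolding Lam_def by blast
  then have "Fib r z" unfolding Fib_def using H_le_Hp by auto
  moreover have "Fib q z" unfolding Fib_def using z by simp
  ultimately have "r = q" using fib_unique r q by blast
  then show False using r z by auto
qed

lemma Lam_gap:
  assumes a: "a \<in> Lam" and b: "b \<in> Lam" and ab: "a < b"
  shows "\<exists>z. a < z \<and> z < b \<and> z \<notin> Lam"
proof -
  obtain s where s: "s \<in> {0..1}" "a = H s \<or> a = Hp s" using a unfolding Lam_def by blast
  obtain t where t: "t \<in> {0..1}" "b = H t \<or> b = Hp t" using b unfolding Lam_def by blast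
  have fa: "Fib s a" "Fib t b" unfolding Fib_def using s t H_le_Hp by auto
  consider "s = t" | "s < t" | "t < s" by linarith
  then show ?thesis
  proof cases
    case 1
    then have "a = H s" "b = Hp s" using s t ab H_le_Hp[of s] by auto
    then show ?thesis using gap_not_Lam[of s "(a + b) / 2"] s ab by (intro exI[of _ "(a + b) / 2"]) auto
  next
    case 2
    have "mass {s<..<t} > 0" using mass_dense[of s t] s t 2 by simp
    then obtain j n where jn: "j < K" "p j (Suc n) \<in> {s<..<t}" using mass_zero by (metis less_irrefl)
    define q where "q = p j (Suc n)"
    have "mass {q} > 0" using mass_pos[OF jn(1)] unfolding q_def by simp
    then have Hq: "H q < Hp q" using Hp_minus_H[of q] by simp
    have "a \<le> Hp s" "Hp s \<le> H q" "Hp q \<le> H t" "H t \<le> b" using fa jn Hp_le_H unfolding Fib_def q_def by auto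
    moreover have "q \<in> {0..1}" using jn s t unfolding q_def by auto
    ultimately show ?thesis using gap_not_Lam[of q "(H q + Hp q) / 2"] Hq
      by (intro exI[of _ "(H q + Hp q) / 2"]) auto
  next
    case 3
    have "Hp t < H s" using 3 s t by (intro Hp_lt_H) auto
    then show ?thesis using fa ab unfolding Fib_def by auto
  qed
qed

lemma f_Lam_in: "x \<in> Lam \<Longrightarrow> f x \<in> Lam"
proof -
  assume "x \<in> Lam"
  then obtain s where s: "s \<in> {0..1}" "x = H s \<or> x = Hp s" unfolding Lam_def by blast
  then have "f x = H (frac (s + \<theta>)) \<or> f x = Hp (frac (s + \<theta>))" using f_Lam by auto
  then show "f x \<in> Lam" unfolding Lam_def using frac_range[of "s + \<theta>"] by auto
qed

end



lemma int_01: "(a::real) - b \<in> \<int> \<Longrightarrow> 0 \<le> a \<Longrightarrow> a \<le> 1 \<Longrightarrow> 0 \<le> b \<Longrightarrow> b < 1 \<Longrightarrow> a = b \<or> a = b + 1"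
proof -
  assume a: "a - b \<in> \<int>" "0 \<le> a" "a \<le> 1" "0 \<le> b" "b < 1"
  then obtain n where n: "a - b = of_int n" by (auto elim: Ints_cases)
  then have "real_of_int (-1) < of_int n" "of_int n \<le> real_of_int 1" using a by auto
  then have "-1 < n" "n \<le> 1" by (simp_all only: of_int_less_iff of_int_le_iff)
  then have "n = 0 \<or> n = 1" by linarith
  then show ?thesis using n by auto
qed

context cons begin

lemma P_sub:
  assumes k: "1 \<le> k" "k \<le> Suc K" and x: "x \<in> P k"
  shows "c (k - 1) \<le> x \<and> x \<le> c k \<and> (x < c k \<or> k = Suc K) \<and> 0 \<le> x \<and> x \<le> real K"
  using x k c0 cN unfolding P_def lo_def hi_def by (auto split: if_splits)

lemma P_sup:
  assumes k: "1 \<le> k" "k \<le> Suc K" and x: "c (k - 1) < x" "x < c k"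
  shows "x \<in> P k"
proof -
  have "0 \<le> c (k - 1)" "c k \<le> real K" using c_range k by auto
  then show ?thesis using x k c0 unfolding P_def lo_def hi_def by auto
qed

lemma f_P: "1 \<le> k \<Longrightarrow> k \<le> Suc K \<Longrightarrow> x \<in> P k \<Longrightarrow> f x = g k x"
  using P_sub f_eq by blast

lemma closure_P:
  assumes k: "1 \<le> k" "k \<le> Suc K"
  shows "closure (P k) = {c (k - 1)..c k}"
proof
  show "closure (P k) \<subseteq> {c (k - 1)..c k}"
    using P_sub[OF k] by (intro closure_minimal) auto
  have lt: "c (k - 1) < c k" using c_mono k by simp
  have "{c (k - 1)<..<c k} \<subseteq> P k" using P_sup[OF k] by auto
  then have "closure {c (k - 1)<..<c k} \<subseteq> closure (P k)" by (rule closure_mono)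
  then show "{c (k - 1)..c k} \<subseteq> closure (P k)" using lt by simp
qed

abbreviation AT where "AT w \<equiv> atom_of 0 (real K) P f w"
abbreviation UU where "UU n \<equiv> \<Union>(atoms (Suc K) 0 (real K) P f n)"

lemma AT_snoc: "AT (w @ [k]) = Fmap P f k (AT w)"
  unfolding atom_of_def by simp

lemma AT_Nil: "AT [] = {0..real K}"
  unfolding atom_of_def by simp

lemma UU_iff: "z \<in> UU n \<longleftrightarrow> (\<exists>w. length w = n \<and> set w \<subseteq> {1..Suc K} \<and> z \<in> AT w)"
  unfolding atoms_def by blast

lemma UU_Suc_iff: "z \<in> UU (Suc n) \<longleftrightarrow>
   (\<exists>w k. length w = n \<and> set w \<subseteq> {1..Suc K} \<and> k \<in> {1..Suc K} \<and> z \<in> Fmap P f k (AT w))"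
  unfolding UU_iff
proof
  assume "\<exists>w. length w = Suc n \<and> set w \<subseteq> {1..Suc K} \<and> z \<in> AT w"
  then obtain w where w: "length w = Suc n" "set w \<subseteq> {1..Suc K}" "z \<in> AT w" by blast
  then obtain v k where "w = v @ [k]" "length v = n" by (metis length_Suc_conv_rev)
  then show "\<exists>w k. length w = n \<and> set w \<subseteq> {1..Suc K} \<and> k \<in> {1..Suc K} \<and> z \<in> Fmap P f k (AT w)"
    using w AT_snoc by auto
next
  assume "\<exists>w k. length w = n \<and> set w \<subseteq> {1..Suc K} \<and> k \<in> {1..Suc K} \<and> z \<in> Fmap P f k (AT w)"
  then obtain w k where w: "length w = n" "set w \<subseteq> {1..Suc K}" "k \<in> {1..Suc K}" "z \<in> Fmap P f k (AT w)" by blast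
  then show "\<exists>w. length w = Suc n \<and> set w \<subseteq> {1..Suc K} \<and> z \<in> AT w"
    using AT_snoc by (intro exI[of _ "w @ [k]"]) auto
qed

lemma fold_sub: "A \<subseteq> {0..real K} \<Longrightarrow> fold (Fmap P f) w A \<subseteq> {0..real K}"
proof (induction w arbitrary: A)
  case Nil then show ?case by simp
next
  case (Cons k w)
  have "Fmap P f k A \<subseteq> {0..real K}"
    unfolding Fmap_def using Cons.prems f_range by (intro closure_minimal) auto
  then show ?case using Cons.IH by simp
qed

lemma AT_sub: "AT w \<subseteq> {0..real K}"
  unfolding atom_of_def by (rule fold_sub) simp

lemma Lam_sub_UU: "Lam \<subseteq> UU n"
proof (induction n)
  case 0
  show ?case
  proof
    fix x assume "x \<in> Lam"
    then have "x \<in> AT []" using Lam_range AT_Nil by auto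
    then show "x \<in> UU 0" using UU_iff[of x 0] by auto
  qed
next
  case (Suc n)
  define W where "W = {w. set w \<subseteq> {1..Suc K} \<and> length w = n}"
  have finW: "finite W" unfolding W_def by (rule finite_lists_length_eq) simp
  define T where "T k w = f ` (AT w \<inter> P k)" for k w
  define F where "F = (\<lambda>i. frac (u i + \<theta>)) ` {..Suc K}"
  have finF: "finite F" unfolding F_def by simp
  have key: "\<exists>k\<in>{1..Suc K}. \<exists>w\<in>W. z' \<in> T k w"
    if r: "r \<in> {0<..<1}" "r \<notin> F" "z' = H r \<or> z' = Hp r" for r z'
  proof -
    define r0 where "r0 = frac (r - \<theta>)"
    have r0: "0 \<le> r0" "r0 < 1" unfolding r0_def by (auto simp: frac_lt_1)
    have rr: "frac (r0 + \<theta>) = r" unfolding r0_def using r(1) by simp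
    have ncut: "r0 \<noteq> u i" if "i \<le> Suc K" for i
    proof
      assume "r0 = u i" then have "r \<in> F" using rr that unfolding F_def by auto
      then show False using r by simp
    qed
    obtain k where k: "k \<in> {1..Suc K}" "u (k - 1) \<le> r0" "r0 < u k \<or> k = Suc K"
      using u_piece_index[OF r0(1)] by blast
    have k1: "1 \<le> k" "k \<le> Suc K" using k by auto
    have rk1: "u (k - 1) < r0" using k(2) ncut[of "k - 1"] k1 by fastforce
    have rk2: "r0 < u k" using k(3) r0(2) uN by auto
    have rot: "r0 + dd k = r" using rot_piece[OF k1 k(2) rk2] rr by simp
    define x0 where "x0 = (if z' = H r then H r0 else Hp r0)"
    have x0L: "x0 \<in> Lam" unfolding x0_def Lam_def using r0 by auto
    have "Hp (u (k - 1)) < H r0" using rk1 r0 u_range[of "k - 1"] k1 by (intro Hp_lt_H) auto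
    then have a1: "c (k - 1) < H r0" using c_Hp k1 by simp
    have a2: "Hp r0 < c k" unfolding c_def using rk2 r0 u_range[of k] k1 by (intro Hp_lt_H) auto
    have "c (k - 1) < x0" "x0 < c k" unfolding x0_def using a1 a2 H_le_Hp[of r0] by auto
    then have x0P: "x0 \<in> P k" using P_sup[OF k1] by simp
    have fx0: "f x0 = z'"
    proof (cases "z' = H r")
      case True
      then have "f x0 = g k (H r0)" using f_P[OF k1 x0P] unfolding x0_def by simp
      also have "\<dots> = H (r0 + dd k)" using ident_b[OF k1 rk1] rk2 by simp
      finally show ?thesis using rot True by simp
    next
      case False
      then have "f x0 = g k (Hp r0)" using f_P[OF k1 x0P] unfolding x0_def by simp
      also have "\<dots> = Hp (r0 + dd k)" using ident_a[OF k1 k(2) rk2] by simp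
      finally show ?thesis using rot False r(3) by simp
    qed
    obtain w where w: "length w = n" "set w \<subseteq> {1..Suc K}" "x0 \<in> AT w"
      using Suc.IH x0L UU_iff by blast
    have "z' \<in> T k w" unfolding T_def using w x0P fx0 by auto
    moreover have "w \<in> W" unfolding W_def using w by simp
    ultimately show ?thesis using k(1) by blast
  qed
  show ?case
  proof
    fix z assume z: "z \<in> Lam"
    have "z \<in> closure (\<Union>k\<in>{1..Suc K}. \<Union>w\<in>W. T k w)"
      unfolding closure_approachable
    proof (intro allI impI)
      fix e :: real assume e: "e > 0"
      obtain r z' where r: "r \<in> {0<..<1}" "r \<notin> F" "z' = H r \<or> z' = Hp r" "\<bar>z' - z\<bar> < e"
        using Lam_self_approx[OF z e finF] by blast
      obtain k w where "k\<in>{1..Suc K}" "w\<in>W" "z' \<in> T k w" using key[OF r(1,2,3)] by blast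
      then have "z' \<in> (\<Union>k\<in>{1..Suc K}. \<Union>w\<in>W. T k w)" by blast
      moreover have "dist z' z < e" using r(4) by (simp add: dist_real_def)
      ultimately show "\<exists>y\<in>\<Union>k\<in>{1..Suc K}. \<Union>w\<in>W. T k w. dist y z < e" by blast
    qed
    also have "closure (\<Union>k\<in>{1..Suc K}. \<Union>w\<in>W. T k w) = (\<Union>k\<in>{1..Suc K}. closure (\<Union>w\<in>W. T k w))"
      by (rule closure_UN_finite) simp
    also have "\<dots> = (\<Union>k\<in>{1..Suc K}. \<Union>w\<in>W. closure (T k w))"
      using closure_UN_finite[OF finW, of "T _"] by (intro SUP_cong) auto
    finally obtain k w where kw: "k \<in> {1..Suc K}" "w \<in> W" "z \<in> closure (T k w)" by blast
    have "z \<in> Fmap P f k (AT w)" unfolding Fmap_def using kw(3) unfolding T_def .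
    then show "z \<in> UU (Suc n)" unfolding UU_Suc_iff using kw(1,2) unfolding W_def by blast
  qed
qed

lemma gap_pullback:
  assumes k: "k \<in> {1..Suc K}" and A: "A \<subseteq> {0..real K}" and q: "q \<in> {0..1}"
    and z: "z \<in> Fmap P f k A" "H q < z" "z < Hp q"
  shows "\<exists>x\<in>A \<inter> P k. \<exists>r\<in>{0..1}. H r < x \<and> x < Hp r \<and> frac (r + \<theta>) = q"
proof -
  define G where "G = {H q<..<Hp q}"
  have "z \<in> G \<inter> closure (f ` (A \<inter> P k))" using z unfolding G_def Fmap_def by auto
  then have "G \<inter> closure (f ` (A \<inter> P k)) \<noteq> {}" by blast
  then have "G \<inter> f ` (A \<inter> P k) \<noteq> {}" using open_Int_closure_eq_empty[of G "f ` (A \<inter> P k)"] unfolding G_def by simp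
  then obtain x where x: "x \<in> A \<inter> P k" "f x \<in> G" by blast
  have x0: "0 \<le> x" "x \<le> real K" using x A by auto
  obtain r where r: "r \<in> {0..1}" "Fib r x" using fib_exists x0 by blast
  have "f x \<notin> Lam" using gap_not_Lam[OF q] x(2) unfolding G_def by auto
  then have "x \<notin> Lam" using f_Lam_in by blast
  then have "x \<noteq> H r" "x \<noteq> Hp r" using r unfolding Lam_def by auto
  then have xr: "H r < x" "x < Hp r" using r unfolding Fib_def by auto
  have "Fib (frac (r + \<theta>)) (f x)" using f_fib r by auto
  moreover have "Fib q (f x)" using x(2) unfolding G_def Fib_def by auto
  moreover have "frac (r + \<theta>) \<in> {0..1}" using frac_range by simp
  ultimately have "frac (r + \<theta>) = q" using fib_unique q by blast
  then show ?thesis using x r xr by blast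
qed

lemma gap_UU:
  "j < K \<Longrightarrow> H (p j (Suc m)) < z \<Longrightarrow> z < Hp (p j (Suc m)) \<Longrightarrow> z \<notin> UU (Suc m)"
proof (induction m arbitrary: j z)
  case 0
  show ?case
  proof
    assume "z \<in> UU (Suc 0)"
    then obtain w k where w: "length w = 0" "k \<in> {1..Suc K}" "z \<in> Fmap P f k (AT w)"
      unfolding UU_Suc_iff by blast
    have q: "p j (Suc 0) \<in> {0..1}" using p_range[of j "Suc 0"] by simp
    have "\<exists>x\<in>AT w \<inter> P k. \<exists>r\<in>{0..1}. H r < x \<and> x < Hp r \<and> frac (r + \<theta>) = p j (Suc 0)"
      using gap_pullback[OF w(2) AT_sub q w(3)] 0(2,3) by blast
    then obtain x r where xr: "r \<in> {0..1}" "H r < x" "x < Hp r" "frac (r + \<theta>) = p j (Suc 0)"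
      by blast
    have "frac (r + \<theta>) = frac (y j + \<theta>)" using xr(4) unfolding p_def by simp
    then have "r - y j \<in> \<int>" by (simp add: frac_eq_iff)
    moreover have "0 \<le> r" "r \<le> 1" "0 \<le> y j" "y j < 1" using xr(1) y_range[OF 0(1)] by auto
    ultimately have "r = y j \<or> r = y j + 1" by (rule int_01)
    then have "r = u j \<or> r = u (Suc K)" using 0(1) y_range[OF 0(1)] xr(1) unfolding u_def by auto
    then have "H r = Hp r" using Hp_u 0(1) by auto
    then show False using xr by simp
  qed
next
  case (Suc m)
  show ?case
  proof
    assume "z \<in> UU (Suc (Suc m))"
    then obtain w k where w: "length w = Suc m" "set w \<subseteq> {1..Suc K}" "k \<in> {1..Suc K}" "z \<in> Fmap P f k (AT w)"
      unfolding UU_Suc_iff by blast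
    have q: "p j (Suc (Suc m)) \<in> {0..1}" using p_range[of j "Suc (Suc m)"] by simp
    have "\<exists>x\<in>AT w \<inter> P k. \<exists>r\<in>{0..1}. H r < x \<and> x < Hp r \<and> frac (r + \<theta>) = p j (Suc (Suc m))"
      using gap_pullback[OF w(3) AT_sub q w(4)] Suc.prems(2,3) by blast
    then obtain x r where xr: "x \<in> AT w" "r \<in> {0..1}" "H r < x" "x < Hp r" "frac (r + \<theta>) = p j (Suc (Suc m))"
      by blast
    have "frac (r + \<theta>) = frac (p j (Suc m) + \<theta>)" using xr(5) p_Suc by simp
    then have "r - p j (Suc m) \<in> \<int>" by (simp add: frac_eq_iff)
    moreover have "0 \<le> r" "r \<le> 1" using xr(2) by auto
    ultimately have "r = p j (Suc m) \<or> r = p j (Suc m) + 1" using int_01 p_range by blast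
    moreover have "p j (Suc m) \<noteq> 0" using p_ne_0 Suc.prems by simp
    ultimately have "r = p j (Suc m)" using xr(2) p_range[of j "Suc m"] by auto
    then have "x \<notin> UU (Suc m)" using Suc.IH[OF Suc.prems(1)] xr by simp
    moreover have "x \<in> UU (Suc m)" unfolding UU_iff using w xr by blast
    ultimately show False by simp
  qed
qed

lemma attractor_eq: "attractor (Suc K) 0 (real K) P f = Lam"
proof
  show "Lam \<subseteq> attractor (Suc K) 0 (real K) P f"
    unfolding attractor_def using Lam_sub_UU by blast
  show "attractor (Suc K) 0 (real K) P f \<subseteq> Lam"
  proof
    fix z assume z: "z \<in> attractor (Suc K) 0 (real K) P f"
    then have zU: "z \<in> UU n" if "n \<ge> 1" for n using that unfolding attractor_def by auto
    then have "z \<in> UU 1" by simp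
    then obtain w where "z \<in> AT w" unfolding UU_iff by blast
    then have "z \<in> {0..real K}" using AT_sub by blast
    then obtain s where s: "s \<in> {0..1}" "Fib s z" using fib_exists by (meson atLeastAtMost_iff)
    show "z \<in> Lam"
    proof (rule ccontr)
      assume "z \<notin> Lam"
      then have "z \<noteq> H s" "z \<noteq> Hp s" using s unfolding Lam_def by auto
      then have zs: "H s < z" "z < Hp s" using s unfolding Fib_def by auto
      then have "mass {s} \<noteq> 0" using Hp_minus_H[of s] by simp
      have "\<exists>j m. j < K \<and> p j (Suc m) \<in> {s}"
      proof (rule ccontr)
        assume "\<not> (\<exists>j m. j < K \<and> p j (Suc m) \<in> {s})"
        then have "mass {s} = 0" by (intro mass_zero) blast
        then show False using \<open>mass {s} \<noteq> 0\<close> by simp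
      qed
      then obtain j m where jm: "j < K" "p j (Suc m) = s" by blast
      then have "z \<notin> UU (Suc m)" using gap_UU zs by blast
      moreover have "z \<in> UU (Suc m)" using zU[of "Suc m"] by simp
      ultimately show False by blast
    qed
  qed
qed

end



context cons begin

lemma P_order:
  assumes "i \<in> {1..Suc K}" "j \<in> {1..Suc K}" "i < j" "x \<in> P i" "z \<in> P j"
  shows "x < z"
proof -
  have "x < c i" using P_sub[of i x] assms by auto
  moreover have "c i \<le> c (j - 1)" using c_mono_le[of i "j - 1"] assms by auto
  moreover have "c (j - 1) \<le> z" using P_sub[of j z] assms by auto
  ultimately show ?thesis by simp
qed

lemma partition: "pieces_partition (Suc K) 0 (real K) P"
proof -
  have h1: "0 < real K" using K1 by simp
  have h2: "2 \<le> Suc K" using K1 by simp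
  have h3: "\<forall>i\<in>{1..Suc K}. P i \<noteq> {} \<and> is_interval (P i) \<and> openin (top_of_set {0..real K}) (P i)"
  proof
    fix i assume i: "i \<in> {1..Suc K}"
    have "c (i - 1) < c i" using c_mono i by auto
    then have "(c (i - 1) + c i) / 2 \<in> P i" using P_sup[of i] i by auto
    then have "P i \<noteq> {}" by auto
    moreover have "is_interval (P i)" unfolding P_def is_interval_1 by auto
    moreover have "openin (top_of_set {0..real K}) (P i)" unfolding P_def by (intro openin_open_Int) auto
    ultimately show "P i \<noteq> {} \<and> is_interval (P i) \<and> openin (top_of_set {0..real K}) (P i)" by blast
  qed
  have h4: "\<forall>i\<in>{1..Suc K}. \<forall>j\<in>{1..Suc K}. i < j \<longrightarrow> (\<forall>x\<in>P i. \<forall>y\<in>P j. x < y)"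
  proof (intro ballI impI)
    fix i j x z assume "i \<in> {1..Suc K}" "j \<in> {1..Suc K}" "i < j" "x \<in> P i" "z \<in> P j"
    then show "x < z" by (rule P_order)
  qed
  have h5: "\<forall>i\<in>{1..Suc K}. \<forall>j\<in>{1..Suc K}. i \<noteq> j \<longrightarrow> P i \<inter> P j = {}"
  proof (intro ballI impI)
    fix i j assume ij: "i \<in> {1..Suc K}" "j \<in> {1..Suc K}" "i \<noteq> j"
    show "P i \<inter> P j = {}"
    proof (cases "i < j")
      case True
      have "x \<notin> P j" if "x \<in> P i" for x using P_order[OF ij(1,2) True that, of x] by auto
      then show ?thesis by blast
    next
      case False then have ji: "j < i" using ij by simp
      have "x \<notin> P i" if "x \<in> P j" for x using P_order[OF ij(2,1) ji that, of x] by auto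
      then show ?thesis by blast
    qed
  qed
  have h6: "(\<Union>i\<in>{1..Suc K}. closure (P i)) = {0..real K}"
  proof
    show "(\<Union>i\<in>{1..Suc K}. closure (P i)) \<subseteq> {0..real K}"
    proof (intro UN_least)
      fix i assume i: "i \<in> {1..Suc K}"
      have "0 \<le> c (i - 1)" "c i \<le> real K" using c_range i by auto
      then show "closure (P i) \<subseteq> {0..real K}" using closure_P[of i] i by auto
    qed
    show "{0..real K} \<subseteq> (\<Union>i\<in>{1..Suc K}. closure (P i))"
    proof
      fix x assume x: "x \<in> {0..real K}"
      then have "\<exists>k\<in>{1..Suc K}. c (k - 1) \<le> x \<and> (x < c k \<or> k = Suc K)" using piece_index by simp
      then obtain k where k: "k \<in> {1..Suc K}" "c (k - 1) \<le> x" "x < c k \<or> k = Suc K" by blast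
      then have "x \<le> c k" using x cN by auto
      then have "x \<in> closure (P k)" using closure_P k by auto
      then show "x \<in> (\<Union>i\<in>{1..Suc K}. closure (P i))" using k by blast
    qed
  qed
  show ?thesis unfolding pieces_partition_def
    using h1 h2 h3 h4 h5 h6 by (intro conjI) (assumption | blast)+
qed

lemma Delta_eq: "Delta (Suc K) P = c ` {1..K}"
proof
  show "Delta (Suc K) P \<subseteq> c ` {1..K}"
  proof
    fix x assume "x \<in> Delta (Suc K) P"
    then obtain i j where ij: "i \<in> {1..Suc K}" "j \<in> {1..Suc K}" "i \<noteq> j" "x \<in> closure (P i)" "x \<in> closure (P j)"
      unfolding Delta_def by blast
    have xi: "c (i - 1) \<le> x" "x \<le> c i" using ij closure_P by auto
    have xj: "c (j - 1) \<le> x" "x \<le> c j" using ij closure_P by auto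
    show "x \<in> c ` {1..K}"
    proof (cases "i < j")
      case True
      then have "c i \<le> c (j - 1)" using c_mono_le ij by auto
      then have "x = c i" using xi xj by simp
      then show ?thesis using True ij by auto
    next
      case False
      then have "j < i" using ij by simp
      then have "c j \<le> c (i - 1)" using c_mono_le ij by auto
      then have "x = c j" using xi xj by simp
      then show ?thesis using \<open>j < i\<close> ij by auto
    qed
  qed
  show "c ` {1..K} \<subseteq> Delta (Suc K) P"
  proof
    fix x assume "x \<in> c ` {1..K}"
    then obtain i where i: "i \<in> {1..K}" "x = c i" by blast
    have "x \<in> closure (P i)" "x \<in> closure (P (Suc i))"
      using closure_P[of i] closure_P[of "Suc i"] i c_mono_le[of "i - 1" i] c_mono_le[of i "Suc i"] by auto
    then show "x \<in> Delta (Suc K) P" unfolding Delta_def using i by (intro CollectI bexI[of _ i] bexI[of _ "Suc i"]) auto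
  qed
qed

lemma mass_point_y: "i < K \<Longrightarrow> H (y i + \<theta>) < Hp (y i + \<theta>)"
proof -
  assume i: "i < K"
  have "p i (Suc 0) = y i + \<theta>" unfolding p_def using y_range[OF i] ylast[OF i] th0 by simp
  then have "mass {y i + \<theta>} > 0" using mass_pos[OF i, of 0] by simp
  then show ?thesis using Hp_minus_H[of "y i + \<theta>"] by linarith
qed

lemma g_left: "1 \<le> k \<Longrightarrow> k \<le> Suc K \<Longrightarrow> g k (c (k - 1)) = Hp (u (k - 1) + dd k)"
  using ident_a[of k "u (k - 1)"] u_mono[of "k - 1" k] c_Hp[of "k - 1"] by simp

lemma g_right: "1 \<le> k \<Longrightarrow> k \<le> Suc K \<Longrightarrow> g k (c k) = H (u k + dd k)"
  using ident_b[of k "u k"] u_mono[of "k - 1" k] unfolding c_def by simp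

lemma jump: "1 \<le> i \<Longrightarrow> i \<le> K \<Longrightarrow> g i (c i) \<noteq> g (Suc i) (c i)"
proof -
  assume i: "1 \<le> i" "i \<le> K"
  have a: "g i (c i) = H (u i + dd i)" using g_right i by simp
  have b: "g (Suc i) (c i) = Hp (u i + dd (Suc i))" using g_left[of "Suc i"] i by simp
  show ?thesis
  proof (cases "i = K")
    case True
    then have "g i (c i) = real K" "g (Suc i) (c i) = 0" using a b uK H1 Hp0 unfolding dd_def by auto
    then show ?thesis using K1 by simp
  next
    case False
    then have "i < K" using i by simp
    then have "g i (c i) = H (y i + \<theta>)" "g (Suc i) (c i) = Hp (y i + \<theta>)" using a b unfolding dd_def u_def by auto
    then show ?thesis using mass_point_y[OF \<open>i < K\<close>] by simp
  qed
qed

lemma discont: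
  assumes i: "1 \<le> i" "i \<le> K"
  shows "\<not> continuous (at (c i) within {0..real K}) f"
proof
  assume cont: "continuous (at (c i) within {0..real K}) f"
  define D where "D = \<bar>g i (c i) - g (Suc i) (c i)\<bar>"
  have D: "D > 0" unfolding D_def using jump[OF i] by simp
  have fc: "f (c i) = g (Suc i) (c i)" using f_eq[of "Suc i" "c i"] c_mono[of i "Suc i"] i by simp
  obtain d where d: "d > 0" "\<And>x'. x' \<in> {0..real K} \<Longrightarrow> dist x' (c i) < d \<Longrightarrow> dist (f x') (f (c i)) < D / 2"
    using cont D unfolding continuous_within_eps_delta by (metis half_gt_zero)
  have cl: "c (i - 1) < c i" using c_mono i by simp
  define mv where "mv = min (min d (c i - c (i - 1))) D"
  define x' where "x' = c i - mv / 2"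
  have m: "0 < mv" unfolding mv_def using d D cl by simp
  have mm: "mv \<le> c i - c (i - 1)" "mv \<le> d" "mv \<le> D" unfolding mv_def by auto
  have x': "c (i - 1) < x'" "x' < c i" "c i - x' < d" "c i - x' < D" unfolding x'_def using m mm by linarith+
  have "0 \<le> c (i - 1)" "c i \<le> real K" using c_range[of "i - 1"] c_range[of i] i by auto
  then have x'r: "x' \<in> {0..real K}" using x' by auto
  have fx: "f x' = g i x'" using f_eq[of i x'] x' i by simp
  have "dist (f x') (f (c i)) < D / 2" using d(2)[OF x'r] x' by (simp add: dist_real_def)
  moreover have "\<bar>g i x' - g i (c i)\<bar> = (c i - x') / 2" unfolding g_def using x' by simp
  ultimately have "\<bar>g i (c i) - g (Suc i) (c i)\<bar> < D / 2 + (c i - x') / 2"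
    using fx fc unfolding dist_real_def by (smt (verit))
  then have "D < D / 2 + (c i - x') / 2" unfolding D_def .
  then show False using x'(4) by (simp add: field_simps)
qed

lemma contracting: "piecewise_contracting (Suc K) 0 (real K) P f"
  unfolding piecewise_contracting_def
proof (intro conjI)
  show "pieces_partition (Suc K) 0 (real K) P" by (rule partition)
  show "f ` {0..real K} \<subseteq> {0..real K}" using f_range by auto
  show "\<forall>c\<in>Delta (Suc K) P. \<not> continuous (at c within {0..real K}) f"
    unfolding Delta_eq using discont by auto
  show "\<exists>lam. 0 < lam \<and> lam < 1 \<and> (\<forall>i\<in>{1..Suc K}. \<forall>x\<in>P i. \<forall>y\<in>P i. \<bar>f x - f y\<bar> \<le> lam * \<bar>x - y\<bar>)"
  proof (intro exI[of _ "1/2"] conjI ballI)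
    fix i x z assume "i \<in> {1..Suc K}" "x \<in> P i" "z \<in> P i"
    then have "f x = g i x" "f z = g i z" using f_P by auto
    then show "\<bar>f x - f z\<bar> \<le> 1 / 2 * \<bar>x - z\<bar>" unfolding g_def by (simp add: abs_if)
  qed auto
qed

lemma affine: "piecewise_affine (Suc K) P f"
  unfolding piecewise_affine_def
proof
  fix i assume i: "i \<in> {1..Suc K}"
  have "\<forall>x\<in>P i. f x = 1/2 * x + bb i" using f_P i unfolding g_def by auto
  then show "\<exists>\<alpha> \<beta>. \<forall>x\<in>P i. f x = \<alpha> * x + \<beta>" by blast
qed

lemma img_bounds:
  assumes k: "1 \<le> k" "k \<le> Suc K" and x: "x \<in> closure (P k)"
  shows "Hp (u (k - 1) + dd k) \<le> g k x \<and> g k x \<le> H (u k + dd k)"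
  using x closure_P[OF k] g_left[OF k] g_right[OF k] g_mono[of "c (k - 1)" x k] g_mono[of x "c k" k] by auto

lemma sep_lt1:
  assumes "1 \<le> i" "i < j" "j \<le> K"
  shows "H (u i + dd i) < Hp (u (j - 1) + dd j)"
proof -
  have "i < K" using assms by auto
  have "H (u i + dd i) = H (y i + \<theta>)" using \<open>i < K\<close> unfolding u_def dd_def by simp
  also have "\<dots> < Hp (y i + \<theta>)" using mass_point_y[OF \<open>i < K\<close>] .
  also have "\<dots> \<le> Hp (u (j - 1) + \<theta>)" using u_mono_le[of i "j - 1"] assms \<open>i < K\<close> unfolding u_def
    by (intro Hp_mono) auto
  finally show ?thesis unfolding dd_def using assms by simp
qed

lemma sep_lt2:
  assumes "1 \<le> i" "i \<le> K"
  shows "H (u (Suc K) + dd (Suc K)) < Hp (u (i - 1) + dd i)"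
proof -
  have "H (u (Suc K) + dd (Suc K)) = H (y 0 + \<theta>)" unfolding uN dd_def y0 by simp
  also have "\<dots> < Hp (y 0 + \<theta>)" using mass_point_y K1 by simp
  also have "\<dots> \<le> Hp (u (i - 1) + \<theta>)" using u_range[of "i - 1"] assms y0 by (intro Hp_mono) auto
  finally show ?thesis unfolding dd_def using assms by simp
qed

lemma sep_ne:
  assumes i: "i \<in> {1..Suc K}" and j: "j \<in> {1..Suc K}" and ij: "i < j"
    and x: "x \<in> closure (P i)" and z: "z \<in> closure (P j)"
  shows "g i x \<noteq> g j z"
proof (cases "j = Suc K")
  case True
  have "g j z \<le> H (u (Suc K) + dd (Suc K))" using img_bounds[of j z] j z True by auto
  also have "\<dots> < Hp (u (i - 1) + dd i)" using sep_lt2[of i] i ij True by auto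
  also have "\<dots> \<le> g i x" using img_bounds[of i x] i x by auto
  finally show ?thesis by simp
next
  case False
  have "g i x \<le> H (u i + dd i)" using img_bounds[of i x] i x by auto
  also have "\<dots> < Hp (u (j - 1) + dd j)" using sep_lt1[of i j] i j ij False by auto
  also have "\<dots> \<le> g j z" using img_bounds[of j z] j z by auto
  finally show ?thesis by simp
qed

lemma separation: "separation (Suc K) P f"
proof -
  have A: "\<forall>i\<in>{1..Suc K}. continuous_on (closure (P i)) (g i) \<and> (\<forall>x\<in>P i. g i x = f x) \<and> inj_on (g i) (closure (P i))"
  proof
    fix i assume i: "i \<in> {1..Suc K}"
    have "continuous_on (closure (P i)) (\<lambda>x. x / 2 + bb i)" by (auto intro!: continuous_intros)
    moreover have "g i = (\<lambda>x. x / 2 + bb i)" by (rule ext) (simp add: g_def)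
    ultimately have 1: "continuous_on (closure (P i)) (g i)" by simp
    have 2: "\<forall>x\<in>P i. g i x = f x" using f_P i by auto
    have 3: "inj_on (g i) (closure (P i))" by (rule inj_onI) (simp add: g_def)
    show "continuous_on (closure (P i)) (g i) \<and> (\<forall>x\<in>P i. g i x = f x) \<and> inj_on (g i) (closure (P i))"
      using 1 2 3 by blast
  qed
  have B: "\<forall>i\<in>{1..Suc K}. \<forall>j\<in>{1..Suc K}. i \<noteq> j \<longrightarrow> g i ` closure (P i) \<inter> g j ` closure (P j) = {}"
  proof (intro ballI impI)
    fix i j assume i: "i \<in> {1..Suc K}" and j: "j \<in> {1..Suc K}" and ij: "i \<noteq> j"
    show "g i ` closure (P i) \<inter> g j ` closure (P j) = {}"
    proof (cases "i < j")
      case True then show ?thesis using sep_ne[OF i j True] by fastforce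
    next
      case False then have "j < i" using ij by simp
      then show ?thesis using sep_ne[OF j i] by fastforce
    qed
  qed
  show ?thesis unfolding separation_def using A B by blast
qed

end



context cons begin

lemma fold_closed: "closed A \<Longrightarrow> closed (fold (Fmap P f) w A)"
proof (induction w arbitrary: A)
  case Nil then show ?case by simp
next
  case (Cons k w)
  have "closed (Fmap P f k A)" unfolding Fmap_def by simp
  then show ?case using Cons.IH by simp
qed

lemma UU_closed: "closed (UU n)"
proof -
  have "atoms (Suc K) 0 (real K) P f n \<subseteq> AT ` {w. set w \<subseteq> {1..Suc K} \<and> length w = n}"
    unfolding atoms_def by blast
  moreover have "finite {w. set w \<subseteq> {1..Suc K} \<and> length w = n}" by (rule finite_lists_length_eq) simp
  ultimately have fin: "finite (atoms (Suc K) 0 (real K) P f n)" by (meson finite_imageI finite_subset)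
  have "\<forall>A\<in>atoms (Suc K) 0 (real K) P f n. closed A"
    unfolding atoms_def atom_of_def using fold_closed by auto
  then show ?thesis using fin by (intro closed_Union) auto
qed

lemma Lam_closed: "closed Lam"
proof -
  have "closed (attractor (Suc K) 0 (real K) P f)" unfolding attractor_def
    using UU_closed by (intro closed_INT) auto
  then show ?thesis using attractor_eq by simp
qed

lemma cantor: "cantor_set Lam"
proof -
  have "H 0 \<in> Lam" unfolding Lam_def by (intro CollectI bexI[of _ 0]) auto
  then have 1: "Lam \<noteq> {}" by blast
  have "Lam \<subseteq> {0..real K}" using Lam_range by auto
  then have "bounded Lam" by (rule bounded_subset[OF bounded_closed_interval])
  then have 2: "compact Lam" using Lam_closed by (simp add: compact_eq_bounded_closed)
  have 3: "x islimpt Lam" if x: "x \<in> Lam" for x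
    unfolding islimpt_approachable
  proof (intro allI impI)
    fix e :: real assume e: "e > 0"
    have "\<exists>r\<in>{0<..<1}. r \<notin> {} \<and> (\<exists>z'. (z' = H r \<or> z' = Hp r) \<and> z' \<noteq> x \<and> \<bar>z' - x\<bar> < e)"
      using Lam_self_approx[OF x e, of "{}"] by simp
    then obtain r z' where r: "r \<in> {0<..<1}" "z' = H r \<or> z' = Hp r" "z' \<noteq> x" "\<bar>z' - x\<bar> < e"
      by blast
    have "r \<in> {0..1}" using r(1) by simp
    then have "z' \<in> Lam" unfolding Lam_def using r(2) by blast
    moreover have "dist z' x < e" using r(4) by (simp add: dist_real_def)
    ultimately show "\<exists>x'\<in>Lam. x' \<noteq> x \<and> dist x' x < e" using r(3) by blast
  qed
  have 4: "connected_component_set Lam x = {x}" if x: "x \<in> Lam" for x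
  proof -
    define C where "C = connected_component_set Lam x"
    have xC: "x \<in> C" unfolding C_def using x by (simp add: connected_component_refl)
    have CL: "C \<subseteq> Lam" unfolding C_def by (rule connected_component_subset)
    have "connected C" unfolding C_def by (rule connected_connected_component)
    then have iC: "is_interval C" by (simp add: is_interval_connected_1)
    have "y = x" if y: "y \<in> C" for y
    proof (rule ccontr)
      assume yx: "y \<noteq> x"
      define a where "a = min x y"
      define b where "b = max x y"
      have ab: "a \<in> C" "b \<in> C" "a < b" unfolding a_def b_def using xC y yx by (auto simp: min_def max_def)
      have "a \<in> Lam" "b \<in> Lam" using ab CL by auto
      then obtain z where z: "a < z" "z < b" "z \<notin> Lam" using Lam_gap[of a b] ab(3) by blast
      have "a \<le> z" "z \<le> b" using z by auto
      then have "z \<in> C" using iC ab(1,2) unfolding is_interval_1 by blast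
      then show False using z CL by blast
    qed
    then show ?thesis using xC unfolding C_def by blast
  qed
  show ?thesis unfolding cantor_set_def
  proof (intro conjI ballI)
    show "Lam \<noteq> {}" by (rule 1)
    show "compact Lam" by (rule 2)
  next
    fix x assume "x \<in> Lam" then show "x islimpt Lam" by (rule 3)
  next
    fix x assume "x \<in> Lam" then show "connected_component_set Lam x = {x}" by (rule 4)
  qed
qed

lemma minimal: "minimal_set f Lam"
proof -
  have 1: "f ` Lam \<subseteq> Lam" using f_Lam_in by blast
  have 2: "z \<in> closure {(f ^^ n) y |n. True}" if y: "y \<in> Lam" and z: "z \<in> Lam" for y z
    unfolding closure_approachable
  proof (intro allI impI)
    fix e :: real assume e: "e > 0"
    have "0 \<le> y" "y \<le> real K" using Lam_range[OF y] by auto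
    then obtain t where "\<bar>(f ^^ t) y - z\<bar> < e" using Lam_orbit_approx[OF _ _ z e] by blast
    moreover have "(f ^^ t) y \<in> {(f ^^ n) y |n. True}" by blast
    ultimately show "\<exists>x\<in>{(f ^^ n) y |n. True}. dist x z < e" unfolding dist_real_def by blast
  qed
  show ?thesis unfolding minimal_set_def using 1 2 by blast
qed

end



context cons begin

definition Q :: "real set" where
  "Q = {0, 1} \<union> {frac (u i + real m * \<theta>) | i m. i \<le> Suc K \<and> 1 \<le> m}"
definition S :: "real set" where "S = {x. \<exists>q\<in>Q. Fib q x}"

lemma Q_range: "q \<in> Q \<Longrightarrow> 0 \<le> q \<and> q \<le> 1"
  unfolding Q_def using frac_range by auto

lemma Q_rot:
  assumes "q \<in> Q \<or> (\<exists>i\<le>Suc K. q = u i)"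
  shows "frac (q + \<theta>) \<in> Q"
proof -
  have th: "frac \<theta> = \<theta>" using th0 th1 by simp
  have base: "frac (u 0 + real 1 * \<theta>) \<in> Q" unfolding Q_def by (intro UnI2 CollectI exI[of _ 0] exI[of _ 1]) simp
  consider "q = 0" | "q = 1" | "\<exists>i m. i \<le> Suc K \<and> 1 \<le> m \<and> q = frac (u i + real m * \<theta>)" | "\<exists>i\<le>Suc K. q = u i"
    using assms unfolding Q_def by blast
  then show ?thesis
  proof cases
    case 1 then show ?thesis using base u0 by simp
  next
    case 2
    have "frac (1 + \<theta>) = frac \<theta>" using frac_1_eq[of \<theta>] by (simp add: add.commute)
    then show ?thesis using 2 base u0 by simp
  next
    case 3
    then obtain i m where im: "i \<le> Suc K" "1 \<le> m" "q = frac (u i + real m * \<theta>)" by blast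
    then have "frac (q + \<theta>) = frac (u i + real (Suc m) * \<theta>)" by (simp add: algebra_simps)
    moreover have "frac (u i + real (Suc m) * \<theta>) \<in> Q" unfolding Q_def using im(1) by (intro UnI2 CollectI exI[of _ i] exI[of _ "Suc m"]) simp
    ultimately show ?thesis by simp
  next
    case 4
    then obtain i where i: "i \<le> Suc K" "q = u i" by blast
    then have "frac (q + \<theta>) = frac (u i + real 1 * \<theta>)" by simp
    moreover have "frac (u i + real 1 * \<theta>) \<in> Q" unfolding Q_def using i(1) by (intro UnI2 CollectI exI[of _ i] exI[of _ 1]) simp
    ultimately show ?thesis by simp
  qed
qed

lemma dd_cases:
  assumes k: "1 \<le> k" "k \<le> Suc K" and q: "u (k - 1) \<le> q" "q \<le> u k"
  shows "q + dd k = frac (q + \<theta>) \<or> q + dd k = 1"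
proof (cases "q < u k")
  case True then show ?thesis using rot_piece[OF k q(1)] by simp
next
  case False
  then have qk: "q = u k" using q by simp
  show ?thesis
  proof (cases "k = Suc K")
    case True
    then have "q = 1" using qk uN by simp
    moreover have "frac (1 + \<theta>) = \<theta>" using frac_1_eq[of \<theta>] th0 th1 by (simp add: add.commute)
    ultimately show ?thesis using True unfolding dd_def by simp
  next
    case False
    then have "u k \<le> u K" using u_mono_le k by simp
    then have "q + \<theta> \<le> 1" "0 \<le> q" using qk uK u_range k by auto
    then have "q + \<theta> < 1 \<or> q + \<theta> = 1" by auto
    then show ?thesis using False \<open>0 \<le> q\<close> th0 unfolding dd_def by auto
  qed
qed

lemma gS:
  assumes k: "1 \<le> k" "k \<le> Suc K" and x: "c (k - 1) \<le> x" "x \<le> c k"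
    and xS: "x \<in> S \<or> x = c (k - 1) \<or> x = c k"
  shows "g k x \<in> S"
proof -
  have "\<exists>q. (q \<in> Q \<or> (\<exists>i\<le>Suc K. q = u i)) \<and> Fib q x"
  proof -
    consider "x \<in> S" | "x = c (k - 1)" | "x = c k" using xS by blast
    then show ?thesis
    proof cases
      case 1 then show ?thesis unfolding S_def by blast
    next
      case 2
      then have "Fib (u (k - 1)) x" using fib_cut'[of "k - 1"] k by simp
      moreover have "k - 1 \<le> Suc K" using k by simp
      ultimately show ?thesis by blast
    next
      case 3
      then have "Fib (u k) x" using fib_cut'[of k] k by simp
      then show ?thesis using k by blast
    qed
  qed
  then obtain q where q: "q \<in> Q \<or> (\<exists>i\<le>Suc K. q = u i)" "Fib q x" by blast
  have q01: "0 \<le> q" "q \<le> 1" using q(1) Q_range u_range by auto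
  have q1: "u (k - 1) \<le> q"
  proof (rule ccontr)
    assume "\<not> u (k - 1) \<le> q"
    then have "Hp q < H (u (k - 1))" using q01 u_range[of "k - 1"] k by (intro Hp_lt_H) auto
    then show False using q(2) x unfolding Fib_def c_def by simp
  qed
  have q2: "q \<le> u k"
  proof (rule ccontr)
    assume "\<not> q \<le> u k"
    then have "Hp (u k) < H q" using q01 u_range[of k] k by (intro Hp_lt_H) auto
    then show False using q(2) x c_Hp[of k] k unfolding Fib_def by simp
  qed
  have f: "Fib (q + dd k) (g k x)" using g_fib[OF k q1 q2 q(2)] .
  have "1 \<in> Q" unfolding Q_def by simp
  then have "q + dd k \<in> Q" using dd_cases[OF k q1 q2] Q_rot[OF q(1)] by auto
  then show ?thesis unfolding S_def using f by blast
qed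

lemma atom_shape:
  "set w \<subseteq> {1..Suc K} \<Longrightarrow> AT w = {} \<or> (\<exists>l r. l \<le> r \<and> AT w = {l..r} \<and> l \<in> S \<and> r \<in> S)"
proof (induction w rule: rev_induct)
  case Nil
  have "1 \<in> Q" "0 \<in> Q" unfolding Q_def by simp_all
  moreover have "Fib 0 0" "Fib 1 (real K)" unfolding Fib_def using H0 Hp0 H1 Hp1 by simp_all
  ultimately have "0 \<in> S" "real K \<in> S" unfolding S_def by blast+
  then show ?case using AT_Nil by auto
next
  case (snoc k w)
  have w: "set w \<subseteq> {1..Suc K}" and k: "1 \<le> k" "k \<le> Suc K" using snoc.prems by auto
  have eq: "AT (w @ [k]) = closure (f ` (AT w \<inter> P k))" using AT_snoc unfolding Fmap_def by simp
  show ?case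
  proof (cases "AT w = {}")
    case True then show ?thesis using eq by simp
  next
    case False
    then obtain l r where lr: "l \<le> r" "AT w = {l..r}" "l \<in> S" "r \<in> S" using snoc.IH[OF w] by blast
    define l' where "l' = max l (c (k - 1))"
    define r' where "r' = min r (c k)"
    have sub: "AT w \<inter> P k \<subseteq> {l'..r'}" using P_sub[OF k] lr(2) unfolding l'_def r'_def by auto
    have fg: "f x = g k x" if "x \<in> AT w \<inter> P k" for x using f_P[OF k] that by simp
    have imsub: "f ` (AT w \<inter> P k) \<subseteq> {g k l'..g k r'}"
    proof
      fix v assume "v \<in> f ` (AT w \<inter> P k)"
      then obtain x where x: "x \<in> AT w \<inter> P k" "v = f x" by blast
      then have "l' \<le> x" "x \<le> r'" using sub by auto
      then show "v \<in> {g k l'..g k r'}" using x fg g_mono by auto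
    qed
    have clsub: "closure (f ` (AT w \<inter> P k)) \<subseteq> {g k l'..g k r'}"
      using imsub by (intro closure_minimal) auto
    consider "l' < r'" | "l' = r'" | "r' < l'" by linarith
    then show ?thesis
    proof cases
      case 1
      have "{l'<..<r'} \<subseteq> AT w \<inter> P k"
      proof
        fix x assume x: "x \<in> {l'<..<r'}"
        then have "c (k - 1) < x" "x < c k" "l \<le> x" "x \<le> r" unfolding l'_def r'_def by auto
        then show "x \<in> AT w \<inter> P k" using P_sup[OF k] lr(2) by auto
      qed
      have "{g k l'<..<g k r'} \<subseteq> f ` (AT w \<inter> P k)"
      proof
        fix v assume v: "v \<in> {g k l'<..<g k r'}"
        define x where "x = 2 * (v - bb k)"
        have gx: "g k x = v" unfolding x_def g_def by (simp add: field_simps)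
        have "l' < x" "x < r'" using v unfolding x_def g_def by auto
        then have "x \<in> AT w \<inter> P k" using \<open>{l'<..<r'} \<subseteq> AT w \<inter> P k\<close> by auto
        then show "v \<in> f ` (AT w \<inter> P k)" using fg gx by (metis image_eqI)
      qed
      then have "closure {g k l'<..<g k r'} \<subseteq> closure (f ` (AT w \<inter> P k))" by (rule closure_mono)
      moreover have "g k l' < g k r'" using 1 unfolding g_def by simp
      ultimately have "{g k l'..g k r'} \<subseteq> closure (f ` (AT w \<inter> P k))" by simp
      then have A: "AT (w @ [k]) = {g k l'..g k r'}" using clsub eq by auto
      have "c (k - 1) \<le> l'" "l' \<le> c k" "l' \<in> S \<or> l' = c (k - 1) \<or> l' = c k"
        using 1 lr(3) unfolding l'_def r'_def by (auto simp: max_def)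
      then have "g k l' \<in> S" using gS[OF k] by blast
      moreover have "c (k - 1) \<le> r'" "r' \<le> c k" "r' \<in> S \<or> r' = c (k - 1) \<or> r' = c k"
        using 1 lr(4) unfolding l'_def r'_def by (auto simp: min_def)
      then have "g k r' \<in> S" using gS[OF k] by blast
      ultimately show ?thesis using A \<open>g k l' < g k r'\<close> by (intro disjI2 exI[of _ "g k l'"] exI[of _ "g k r'"]) auto
    next
      case 2
      have "AT (w @ [k]) \<subseteq> {g k l'}" using clsub eq 2 by auto
      then have A: "AT (w @ [k]) = {} \<or> AT (w @ [k]) = {g k l'..g k l'}" by auto
      have "c (k - 1) \<le> l'" unfolding l'_def by simp
      moreover have "l' \<le> c k" using 2 unfolding r'_def by simp
      moreover have "l' \<in> S \<or> l' = c (k - 1)" unfolding l'_def using lr(3) by (auto simp: max_def)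
      ultimately have "g k l' \<in> S" using gS[OF k] by blast
      then show ?thesis using A by (intro disjCI exI[of _ "g k l'"]) auto
    next
      case 3
      then have "AT w \<inter> P k = {}" using sub by auto
      then show ?thesis using eq by simp
    qed
  qed
qed

definition iota :: "nat \<Rightarrow> nat" where "iota j = (if j < K then j else 0)"
definition alpha :: "nat \<Rightarrow> int" where "alpha j = (if j = K then -1 else 0)"
definition beta :: "nat \<Rightarrow> int" where "beta j = (if j < K then 0 else 1)"

lemma u_rep: "j \<le> Suc K \<Longrightarrow> u j = y (iota j) + of_int (alpha j) * \<theta> + of_int (beta j)"
  unfolding u_def iota_def alpha_def beta_def using y0 K1 by auto

lemma iota_lt: "iota j < K"
  unfolding iota_def using K1 by auto

lemma u_notin_Q:
  assumes i: "1 \<le> i" "i \<le> K"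
  shows "u i \<notin> Q"
proof
  assume uQ: "u i \<in> Q"
  have "u 0 < u i" "u i < u (Suc K)" using u_mono i by auto
  then have n01: "u i \<noteq> 0" "u i \<noteq> 1" using u0 uN by auto
  then obtain i' m where im: "i' \<le> Suc K" "1 \<le> m" "u i = frac (u i' + real m * \<theta>)"
    using uQ unfolding Q_def by auto
  then have "u i' + real m * \<theta> - u i \<in> \<int>" by (metis frac_unique_iff)
  moreover have "u i' + real m * \<theta> - u i = (y (iota i') - y (iota i) - of_int (- (alpha i' + int m - alpha i)) * \<theta>) + of_int (beta i' - beta i)"
    using u_rep[OF im(1)] u_rep[of i] i by (simp add: algebra_simps)
  ultimately have "y (iota i') - y (iota i) - of_int (- (alpha i' + int m - alpha i)) * \<theta> \<in> \<int>"
    by (metis Ints_diff Ints_of_int add_diff_cancel_right')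
  then have "iota i' = iota i \<and> - (alpha i' + int m - alpha i) = 0" by (rule indep'[OF iota_lt iota_lt])
  then have eq: "iota i' = iota i" "alpha i' + int m - alpha i = 0" by auto
  show False
  proof (cases "i < K")
    case True
    then have "iota i = i" "alpha i = 0" unfolding iota_def alpha_def by auto
    then have "i' = i" using eq(1) i unfolding iota_def by (auto split: if_splits)
    then show False using eq(2) \<open>alpha i = 0\<close> im(2) by simp
  next
    case False
    then have "alpha i = -1" using i unfolding alpha_def by simp
    moreover have "alpha i' \<ge> -1" unfolding alpha_def by simp
    ultimately show False using eq(2) im(2) by simp
  qed
qed

lemma c_notin_S:
  assumes i: "1 \<le> i" "i \<le> K"
  shows "c i \<notin> S"
proof
  assume "c i \<in> S"
  then obtain q where q: "q \<in> Q" "Fib q (c i)" unfolding S_def by blast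
  have "Fib (u i) (c i)" using fib_cut' i by simp
  moreover have "u i \<in> {0..1}" "q \<in> {0..1}" using u_range[of i] Q_range[OF q(1)] i by auto
  ultimately have "q = u i" using fib_unique q(2) by blast
  then show False using u_notin_Q[OF i] q(1) by simp
qed

lemma visit:
  assumes i: "1 \<le> i" "i \<le> K" and x: "0 \<le> x" "x \<le> real K"
  shows "\<exists>A\<in>atoms_visited (Suc K) 0 (real K) P f n x. c i \<in> A \<and>
           (\<exists>t. (f ^^ (t + n)) x \<in> A \<inter> P i) \<and> (\<exists>t'. (f ^^ (t' + n)) x \<in> A \<inter> P (Suc i))"
proof -
  have ui: "0 < u i" "u i < 1" using u_mono[of 0 i] u_mono[of i "Suc K"] u0 uN i by auto
  have "c i \<in> Lam" unfolding Lam_def c_def using ui by (intro CollectI bexI[of _ "u i"]) auto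
  then have "c i \<in> UU n" using Lam_sub_UU by blast
  then obtain w where w: "length w = n" "set w \<subseteq> {1..Suc K}" "c i \<in> AT w" unfolding UU_iff by blast
  then have "AT w \<noteq> {}" by auto
  then obtain l r where lr: "l \<le> r" "AT w = {l..r}" "l \<in> S" "r \<in> S" using atom_shape[OF w(2)] by blast
  have "l \<noteq> c i" "r \<noteq> c i" using lr c_notin_S[OF i] by auto
  then have lcr: "l < c i" "c i < r" using w(3) lr(2) by auto
  have c1: "c (i - 1) < c i" "c i < c (Suc i)" using c_mono i by auto
  define e1 where "e1 = c i - max l (c (i - 1))"
  have e1: "e1 > 0" unfolding e1_def using lcr c1 by simp
  obtain t where t: "t \<ge> n" "H (u i) - e1 < (f ^^ t) x" "(f ^^ t) x < H (u i)"
    using left_approx[OF x ui(1) _ e1, of n] ui by auto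
  have tA: "(f ^^ t) x \<in> AT w \<inter> P i"
  proof -
    have "max l (c (i - 1)) < (f ^^ t) x" "(f ^^ t) x < c i" using t unfolding e1_def c_def by auto
    then have "l < (f ^^ t) x" "c (i - 1) < (f ^^ t) x" "(f ^^ t) x < c i" by auto
    then show ?thesis using P_sup[of i] i lr(2) lcr by auto
  qed
  define e2 where "e2 = min r (c (Suc i)) - c i"
  have e2: "e2 > 0" unfolding e2_def using lcr c1 by simp
  obtain t' where t': "t' \<ge> n" "Hp (u i) < (f ^^ t') x" "(f ^^ t') x < Hp (u i) + e2"
    using right_approx[OF x _ ui(2) e2, of n] ui by auto
  have t'A: "(f ^^ t') x \<in> AT w \<inter> P (Suc i)"
  proof -
    have hp: "Hp (u i) = c i" using c_Hp i by simp
    have "c i < (f ^^ t') x" "(f ^^ t') x < min r (c (Suc i))" using t' hp unfolding e2_def by auto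
    then have "c i < (f ^^ t') x" "(f ^^ t') x < r" "(f ^^ t') x < c (Suc i)" by auto
    then show ?thesis using P_sup[of "Suc i"] i lr(2) lcr by auto
  qed
  have t1: "(f ^^ ((t - n) + n)) x \<in> AT w \<inter> P i" using tA t(1) by simp
  have t2: "(f ^^ ((t' - n) + n)) x \<in> AT w \<inter> P (Suc i)" using t'A t'(1) by simp
  have "AT w \<in> atoms (Suc K) 0 (real K) P f n" unfolding atoms_def using w \<open>AT w \<noteq> {}\<close> by blast
  then have "AT w \<in> atoms_visited (Suc K) 0 (real K) P f n x" unfolding atoms_visited_def using t1 by blast
  then show ?thesis using w(3) t1 t2 by blast
qed

lemma delta_lr:
  assumes x: "x \<in> {0..real K}"
  shows "Delta_lr (Suc K) 0 (real K) P f x = Delta (Suc K) P"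
proof
  show "Delta_lr (Suc K) 0 (real K) P f x \<subseteq> Delta (Suc K) P"
  proof
    fix z assume "z \<in> Delta_lr (Suc K) 0 (real K) P f x"
    then have "z \<in> Delta_lr_n (Suc K) 0 (real K) P f 1 x" unfolding Delta_lr_def by auto
    then obtain i where "i \<in> {1..<Suc K}" "z \<in> closure (P i) \<inter> closure (P (Suc i))"
      unfolding Delta_lr_n_def by blast
    then show "z \<in> Delta (Suc K) P" unfolding Delta_def
      by (intro CollectI bexI[of _ i] bexI[of _ "Suc i"]) auto
  qed
  show "Delta (Suc K) P \<subseteq> Delta_lr (Suc K) 0 (real K) P f x"
  proof
    fix z assume "z \<in> Delta (Suc K) P"
    then obtain i where i: "i \<in> {1..K}" "z = c i" unfolding Delta_eq by blast
    have cl: "c i \<in> closure (P i) \<inter> closure (P (Suc i))"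
      using closure_P[of i] closure_P[of "Suc i"] i c_mono_le[of "i - 1" i] c_mono_le[of i "Suc i"] by auto
    have "c i \<in> Delta_lr_n (Suc K) 0 (real K) P f n x" for n
    proof -
      have "\<exists>A\<in>atoms_visited (Suc K) 0 (real K) P f n x. c i \<in> A \<and>
           (\<exists>t. (f ^^ (t + n)) x \<in> A \<inter> P i) \<and> (\<exists>t'. (f ^^ (t' + n)) x \<in> A \<inter> P (Suc i))"
        using visit[of i x n] i x by auto
      moreover have "i \<in> {1..<Suc K}" using i by auto
      ultimately show ?thesis unfolding Delta_lr_n_def using cl by blast
    qed
    then show "z \<in> Delta_lr (Suc K) 0 (real K) P f x" unfolding Delta_lr_def using i by blast
  qed
qed

lemma main:
  "\<exists>(a::real) (b::real) (P :: nat \<Rightarrow> real set) (f :: real \<Rightarrow> real).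
     piecewise_contracting (Suc K) a b P f \<and> piecewise_affine (Suc K) P f \<and> separation (Suc K) P f \<and>
     cantor_set (attractor (Suc K) a b P f) \<and> minimal_set f (attractor (Suc K) a b P f) \<and>
     (\<forall>x\<in>{a..b}. Delta_lr (Suc K) a b P f x = Delta (Suc K) P)"
proof -
  have "piecewise_contracting (Suc K) 0 (real K) P f \<and> piecewise_affine (Suc K) P f \<and> separation (Suc K) P f \<and>
     cantor_set (attractor (Suc K) 0 (real K) P f) \<and> minimal_set f (attractor (Suc K) 0 (real K) P f) \<and>
     (\<forall>x\<in>{0..real K}. Delta_lr (Suc K) 0 (real K) P f x = Delta (Suc K) P)"
    unfolding attractor_eq using contracting affine separation cantor minimal delta_lr by blast
  then show ?thesis by blast
qed

end



theorem theorem3: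
  fixes N :: nat
  assumes "N \<ge> 2"
  shows "\<exists>(a::real) (b::real) (P :: nat \<Rightarrow> real set) (f :: real \<Rightarrow> real).
           piecewise_contracting N a b P f \<and> piecewise_affine N P f \<and> separation N P f \<and>
           cantor_set (attractor N a b P f) \<and> minimal_set f (attractor N a b P f) \<and>
           (\<forall>x\<in>{a..b}. Delta_lr N a b P f x = Delta N P)"
proof -
  have "uncountable ({0<..<1/2::real} - \<rat>)"
    by (intro uncountable_minus_countable) (auto simp: uncountable_open_interval countable_rat)
  then obtain \<theta> :: real where th: "0 < \<theta>" "\<theta> < 1/2" "\<theta> \<notin> \<rat>"
    by (metis DiffE ex_in_conv greaterThanLessThan_iff uncountable_infinite finite.emptyI)
  define B where "B = (\<lambda>(m, n, d). (of_int m * \<theta> + of_int n) / of_int d) ` (UNIV :: (int \<times> int \<times> int) set)"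
  have cB: "countable B" unfolding B_def by simp
  have "uncountable ({0<..<1/(2 * real N)} - B)"
    using assms by (intro uncountable_minus_countable cB) (auto simp: uncountable_open_interval)
  then obtain s :: real where s: "0 < s" "s < 1/(2 * real N)" "s \<notin> B"
    by (metis DiffE ex_in_conv greaterThanLessThan_iff uncountable_infinite finite.emptyI)
  define K where "K = N - 1"
  define y where "y j = real j * s" for j
  have NK: "N = Suc K" unfolding K_def using assms by simp
  have sN: "real N * s < 1/2"
  proof -
    have "real N * s < real N * (1 / (2 * real N))" using s assms by (intro mult_strict_left_mono) auto
    also have "\<dots> = 1/2" using assms by simp
    finally show ?thesis .
  qed
  interpret cons K \<theta> y
  proof
    show "1 \<le> K" unfolding K_def using assms by simp
    show "0 < \<theta>" "\<theta> < 1/2" "\<theta> \<notin> \<rat>" using th by auto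
    show "y 0 = 0" unfolding y_def by simp
    show "y j < y k" if "j < k" "k < K" for j k unfolding y_def using that s by simp
    show "y j < 1 - \<theta>" if "j < K" for j
    proof -
      have "real j * s \<le> real N * s" using that s unfolding K_def by (intro mult_right_mono) auto
      then show ?thesis unfolding y_def using sN th by simp
    qed
    show "j = k \<and> m = 0" if jk: "j < K" "k < K" "y j - y k = of_int m * \<theta> + of_int n" for j k m n
    proof (cases "j = k")
      case True
      then have e: "of_int m * \<theta> + of_int n = 0" using jk by simp
      show ?thesis
      proof (rule ccontr)
        assume "\<not> (j = k \<and> m = 0)"
        then have "m \<noteq> 0" using True by simp
        then have "\<theta> = - of_int n / of_int m" using e by (simp add: field_simps)
        then have "\<theta> \<in> \<rat>" by simp
        then show False using th by simp
      qed
    next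
      case False
      define d where "d = int j - int k"
      have d0: "d \<noteq> 0" unfolding d_def using False by simp
      have "of_int d * s = of_int m * \<theta> + of_int n" using jk unfolding y_def d_def by (simp add: algebra_simps)
      then have "s = (of_int m * \<theta> + of_int n) / of_int d" using d0 by (simp add: field_simps)
      then have "s \<in> B" unfolding B_def by (intro image_eqI[of _ _ "(m, n, d)"]) auto
      then show ?thesis using s by simp
    qed
  qed
  show ?thesis using main unfolding NK .
qed


end
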